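(* Let $\Lambda'$, $\Lambda\subset\Lambda'$ and $Z$ be as in the context. Let $V$ and $W$ be $\Lambda'$-modules on which $Z$ acts by characters $\omega_V,\omega_W:Z\to\mathbb F^\times$, and suppose $\omega_V=\omega_W$. Then for every $i\ge0$ restriction induces an isomorphism $$\textnormal{Ext}^i_{\Lambda'}(V,W)\xrightarrow{\sim}\textnormal{Ext}^i_\Lambda(V|_\Lambda,W|_\Lambda).$$
   Context: Let $\mathbb{F}$ be a field of characteristic $p$, sufficiently large so that all simple modules considered are absolutely simple. $\Lambda'$ is an Artinian $\mathbb F$-algebra, $\Lambda\subset\Lambda'$ a subalgebra, and $Z$ a finite subgroup of the group of units of the center of $\Lambda'$, of order prime to $p$. Put $Y:=Z/(\Lambda\cap Z)$. It is assumed that $\Lambda'$ is a crossed product $\Lambda*Y$: there is a set $\widetilde Y=\{\widetilde y:y\in Y\}$ of units of $\Lambda'$ (the image of a set-theoretic section $Y\to Z$ sending $1$ to $1$) with $|\widetilde Y|=|Y|$, such that $\Lambda'$ is free as a left and as a right $\Lambda$-module with basis $\widetilde Y$, $\widetilde{1_Y}=1$, and for $y_1,y_2\in Y$, $\widetilde{y_1}\Lambda=\Lambda\widetilde{y_1}$ and $\widetilde{y_1}\widetilde{y_2}\Lambda=\widetilde{y_1y_2}\Lambda$. Modules are left modules; "$Z$ acts by a character $\omega$" means $z\cdot v=\omega(z)v$ for all $z\in Z$, $v$ in the module. *)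

theory Defs
  imports Main "HOL-Computational_Algebra.Primes"
begin

text \<open>The algebra \<Lambda>' is the whole ring type 'r; the field F is the type 'f, acting
  through a central ring homomorphism iota.\<close>

definition falgebra :: "('f::field \<Rightarrow> 'r::ring_1) \<Rightarrow> bool" where
  "falgebra iota \<longleftrightarrow> iota 1 = 1 \<and> (\<forall>a b. iota (a + b) = iota a + iota b)
     \<and> (\<forall>a b. iota (a * b) = iota a * iota b) \<and> (\<forall>c x. iota c * x = x * iota c)"

definition left_ideal :: "'r::ring_1 set \<Rightarrow> bool" where
  "left_ideal I \<longleftrightarrow> 0 \<in> I \<and> (\<forall>x\<in>I. \<forall>y\<in>I. x + y \<in> I) \<and> (\<forall>r. \<forall>x\<in>I. r * x \<in> I)"

definition artinian :: "'r::ring_1 itself \<Rightarrow> bool" where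
  "artinian _ \<longleftrightarrow> (\<forall>I :: nat \<Rightarrow> 'r set. (\<forall>n. left_ideal (I n) \<and> I (Suc n) \<subseteq> I n)
        \<longrightarrow> (\<exists>N. \<forall>n\<ge>N. I n = I N))"

definition subalgebra :: "('f::field \<Rightarrow> 'r::ring_1) \<Rightarrow> 'r set \<Rightarrow> bool" where
  "subalgebra iota A \<longleftrightarrow> range iota \<subseteq> A \<and> (\<forall>x\<in>A. \<forall>y\<in>A. x + y \<in> A \<and> x * y \<in> A)
     \<and> (\<forall>x\<in>A. - x \<in> A)"

definition lmodule :: "('r::ring_1 \<Rightarrow> 'v::ab_group_add \<Rightarrow> 'v) \<Rightarrow> bool" where
  "lmodule act \<longleftrightarrow> (\<forall>a b v. act (a + b) v = act a v + act b v)
     \<and> (\<forall>a v w. act a (v + w) = act a v + act a w)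
     \<and> (\<forall>a b v. act (a * b) v = act a (act b v)) \<and> (\<forall>v. act 1 v = v)"

definition central_unit_group :: "'r::ring_1 set \<Rightarrow> bool" where
  "central_unit_group Z \<longleftrightarrow> finite Z \<and> 1 \<in> Z \<and> (\<forall>x\<in>Z. \<forall>y\<in>Z. x * y \<in> Z)
     \<and> (\<forall>z\<in>Z. \<exists>z'\<in>Z. z * z' = 1 \<and> z' * z = 1) \<and> (\<forall>z\<in>Z. \<forall>x. z * x = x * z)"

definition zcoset :: "'r::ring_1 set \<Rightarrow> 'r \<Rightarrow> 'r set" where
  "zcoset H z = (\<lambda>h. z * h) ` H"

definition quotY :: "'r::ring_1 set \<Rightarrow> 'r set \<Rightarrow> 'r set set" where
  "quotY Lam Z = zcoset (Lam \<inter> Z) ` Z"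

text \<open>Product of cosets in Y (well defined since Z is central).\<close>
definition ymult :: "'r::ring_1 set \<Rightarrow> 'r set \<Rightarrow> 'r set \<Rightarrow> 'r set \<Rightarrow> 'r set" where
  "ymult Lam Z y1 y2 = zcoset (Lam \<inter> Z) ((SOME z1. z1 \<in> y1) * (SOME z2. z2 \<in> y2))"

text \<open>The algebra (all of 'r) is the crossed product \<Lambda> * Y with respect to the
  section sec : Y \<rightarrow> Z (whose image is the set \<open>Y~\<close>).\<close>
definition crossed_product :: "'r::ring_1 set \<Rightarrow> 'r set \<Rightarrow> ('r set \<Rightarrow> 'r) \<Rightarrow> bool" where
  "crossed_product Lam Z sec \<longleftrightarrow>
     (let Y = quotY Lam Z in
       (\<forall>y\<in>Y. sec y \<in> y)
     \<and> sec (zcoset (Lam \<inter> Z) 1) = 1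
     \<and> inj_on sec Y
     \<and> (\<forall>x. \<exists>!a. (\<forall>y\<in>Y. a y \<in> Lam) \<and> (\<forall>y. y \<notin> Y \<longrightarrow> a y = 0)
                 \<and> x = (\<Sum>y\<in>Y. a y * sec y))
     \<and> (\<forall>x. \<exists>!a. (\<forall>y\<in>Y. a y \<in> Lam) \<and> (\<forall>y. y \<notin> Y \<longrightarrow> a y = 0)
                 \<and> x = (\<Sum>y\<in>Y. sec y * a y))
     \<and> (\<forall>y\<in>Y. (\<lambda>l. sec y * l) ` Lam = (\<lambda>l. l * sec y) ` Lam)
     \<and> (\<forall>y1\<in>Y. \<forall>y2\<in>Y. (\<lambda>l. sec y1 * sec y2 * l) ` Lam
                          = (\<lambda>l. sec (ymult Lam Z y1 y2) * l) ` Lam))"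

definition acts_by_character ::
  "('f::field \<Rightarrow> 'r::ring_1) \<Rightarrow> 'r set \<Rightarrow> ('r \<Rightarrow> 'v::ab_group_add \<Rightarrow> 'v) \<Rightarrow> ('r \<Rightarrow> 'f) \<Rightarrow> bool" where
  "acts_by_character iota Z act om \<longleftrightarrow>
     (\<forall>z\<in>Z. om z \<noteq> 0) \<and> (\<forall>z1\<in>Z. \<forall>z2\<in>Z. om (z1 * z2) = om z1 * om z2)
     \<and> (\<forall>z\<in>Z. \<forall>v. act z v = act (iota (om z)) v)"

text \<open>For an F-subalgebra A and A-modules V, W, Ext^n_A(V,W) is the n-th cohomology of the
  complex C^n = Hom_F(A^{\<otimes>n} \<otimes>_F V, W) (cochains = F-multilinear maps A^n \<times> V \<rightarrow> W),
  obtained by applying Hom_A(-,W) to the bar resolution A \<otimes>_F A^{\<otimes>n} \<otimes>_F V of V.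
  Cochains are represented by functions on lists of length n, zero off A^n.\<close>

definition sgnw :: "nat \<Rightarrow> 'w::ab_group_add \<Rightarrow> 'w" where
  "sgnw k w = (if even k then w else - w)"

definition merge :: "nat \<Rightarrow> 'r::ring_1 list \<Rightarrow> 'r list" where
  "merge j xs = take j xs @ [xs ! j * xs ! Suc j] @ drop (Suc (Suc j)) xs"

definition adm :: "'r set \<Rightarrow> nat \<Rightarrow> 'r list \<Rightarrow> bool" where
  "adm A n xs \<longleftrightarrow> length xs = n \<and> set xs \<subseteq> A"

definition bar_d :: "('r::ring_1 \<Rightarrow> 'v \<Rightarrow> 'v) \<Rightarrow> ('r \<Rightarrow> 'w::ab_group_add \<Rightarrow> 'w) \<Rightarrow> nat
    \<Rightarrow> ('r list \<Rightarrow> 'v \<Rightarrow> 'w) \<Rightarrow> 'r list \<Rightarrow> 'v \<Rightarrow> 'w" where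
  "bar_d actV actW n f xs v =
     actW (hd xs) (f (tl xs) v)
     + (\<Sum>j<n. sgnw (Suc j) (f (merge j xs) v))
     + sgnw (Suc n) (f (butlast xs) (actV (last xs) v))"

definition cochain :: "('f::field \<Rightarrow> 'r::ring_1) \<Rightarrow> 'r set \<Rightarrow> ('r \<Rightarrow> 'v::ab_group_add \<Rightarrow> 'v)
    \<Rightarrow> ('r \<Rightarrow> 'w::ab_group_add \<Rightarrow> 'w) \<Rightarrow> nat \<Rightarrow> ('r list \<Rightarrow> 'v \<Rightarrow> 'w) \<Rightarrow> bool" where
  "cochain iota A actV actW n f \<longleftrightarrow>
     (\<forall>xs v. \<not> adm A n xs \<longrightarrow> f xs v = 0)
   \<and> (\<forall>xs. adm A n xs \<longrightarrow>
        (\<forall>v v'. f xs (v + v') = f xs v + f xs v')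
      \<and> (\<forall>c v. f xs (actV (iota c) v) = actW (iota c) (f xs v))
      \<and> (\<forall>i<n. \<forall>y\<in>A. \<forall>v. f (xs[i := xs ! i + y]) v = f xs v + f (xs[i := y]) v)
      \<and> (\<forall>i<n. \<forall>c v. f (xs[i := iota c * xs ! i]) v = actW (iota c) (f xs v)))"

definition cocycle :: "('f::field \<Rightarrow> 'r::ring_1) \<Rightarrow> 'r set \<Rightarrow> ('r \<Rightarrow> 'v::ab_group_add \<Rightarrow> 'v)
    \<Rightarrow> ('r \<Rightarrow> 'w::ab_group_add \<Rightarrow> 'w) \<Rightarrow> nat \<Rightarrow> ('r list \<Rightarrow> 'v \<Rightarrow> 'w) \<Rightarrow> bool" where
  "cocycle iota A actV actW n f \<longleftrightarrow> cochain iota A actV actW n f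
     \<and> (\<forall>xs v. adm A (Suc n) xs \<longrightarrow> bar_d actV actW n f xs v = 0)"

definition coboundary :: "('f::field \<Rightarrow> 'r::ring_1) \<Rightarrow> 'r set \<Rightarrow> ('r \<Rightarrow> 'v::ab_group_add \<Rightarrow> 'v)
    \<Rightarrow> ('r \<Rightarrow> 'w::ab_group_add \<Rightarrow> 'w) \<Rightarrow> nat \<Rightarrow> ('r list \<Rightarrow> 'v \<Rightarrow> 'w) \<Rightarrow> bool" where
  "coboundary iota A actV actW n f \<longleftrightarrow> cochain iota A actV actW n f
     \<and> (case n of 0 \<Rightarrow> (\<forall>xs v. f xs v = 0)
        | Suc m \<Rightarrow> (\<exists>g. cochain iota A actV actW m g
                        \<and> (\<forall>xs v. adm A n xs \<longrightarrow> f xs v = bar_d actV actW m g xs v)))"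

definition ext_rel :: "('f::field \<Rightarrow> 'r::ring_1) \<Rightarrow> 'r set \<Rightarrow> ('r \<Rightarrow> 'v::ab_group_add \<Rightarrow> 'v)
    \<Rightarrow> ('r \<Rightarrow> 'w::ab_group_add \<Rightarrow> 'w) \<Rightarrow> nat \<Rightarrow> (('r list \<Rightarrow> 'v \<Rightarrow> 'w) \<times> ('r list \<Rightarrow> 'v \<Rightarrow> 'w)) set" where
  "ext_rel iota A actV actW n = {(f, g). cocycle iota A actV actW n f \<and> cocycle iota A actV actW n g
      \<and> coboundary iota A actV actW n (\<lambda>xs v. f xs v - g xs v)}"

definition Ext :: "('f::field \<Rightarrow> 'r::ring_1) \<Rightarrow> 'r set \<Rightarrow> ('r \<Rightarrow> 'v::ab_group_add \<Rightarrow> 'v)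
    \<Rightarrow> ('r \<Rightarrow> 'w::ab_group_add \<Rightarrow> 'w) \<Rightarrow> nat \<Rightarrow> ('r list \<Rightarrow> 'v \<Rightarrow> 'w) set set" where
  "Ext iota A actV actW n = {f. cocycle iota A actV actW n f} // ext_rel iota A actV actW n"

definition res_cochain :: "'r set \<Rightarrow> ('r list \<Rightarrow> 'v \<Rightarrow> 'w::zero) \<Rightarrow> 'r list \<Rightarrow> 'v \<Rightarrow> 'w" where
  "res_cochain A f = (\<lambda>xs v. if set xs \<subseteq> A then f xs v else 0)"

definition ext_res :: "('f::field \<Rightarrow> 'r::ring_1) \<Rightarrow> 'r set \<Rightarrow> ('r \<Rightarrow> 'v::ab_group_add \<Rightarrow> 'v)
    \<Rightarrow> ('r \<Rightarrow> 'w::ab_group_add \<Rightarrow> 'w) \<Rightarrow> nat \<Rightarrow> ('r list \<Rightarrow> 'v \<Rightarrow> 'w) set \<Rightarrow> ('r list \<Rightarrow> 'v \<Rightarrow> 'w) set" where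
  "ext_res iota A actV actW n E = ext_rel iota A actV actW n `` {res_cochain A (SOME f. f \<in> E)}"

end

theory Submission
  imports Defs
begin


lemma sgnw_simps[simp]:
  "sgnw 0 w = w" "sgnw (Suc k) w = - sgnw k w"
  "sgnw k (0::'w::ab_group_add) = 0"
  by (auto simp: sgnw_def)

lemma sgnw_add: "sgnw k (a + b) = sgnw k a + sgnw k (b::'w::ab_group_add)"
  by (auto simp: sgnw_def)
lemma sgnw_minus: "sgnw k (- a) = - sgnw k (a::'w::ab_group_add)"
  by (auto simp: sgnw_def)
lemma sgnw_diff: "sgnw k (a - b) = sgnw k a - sgnw k (b::'w::ab_group_add)"
  by (auto simp: sgnw_def)
lemma sgnw_sgnw: "sgnw k (sgnw j a) = sgnw (k + j) (a::'w::ab_group_add)"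
  by (auto simp: sgnw_def)
lemma sgnw_sum: "sgnw k (sum f S) = (\<Sum>x\<in>S. sgnw k (f x :: 'w::ab_group_add))"
  by (auto simp: sgnw_def sum_negf)
lemma sgnw_add2: "sgnw (k + 2) a = sgnw k (a::'w::ab_group_add)"
  by (auto simp: sgnw_def)
lemma sgnw_double: "sgnw (k + k) a = (a::'w::ab_group_add)"
  by (auto simp: sgnw_def)

lemma lmod_simps:
  assumes "lmodule act"
  shows "act (a + b) v = act a v + act b v" "act a (v + w) = act a v + act a w"
    "act (a * b) v = act a (act b v)" "act 1 v = v"
  using assms unfolding lmodule_def by auto

lemma lmod_zero:
  assumes "lmodule act" shows "act a 0 = 0" "act 0 v = 0"
proof -
  have "act a 0 + act a 0 = act a 0 + 0" using lmod_simps(2)[OF assms, of a 0 0] by simp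
  then show "act a 0 = 0" by simp
  have "act 0 v + act 0 v = act 0 v + 0" using lmod_simps(1)[OF assms, of 0 0 v] by simp
  then show "act 0 v = 0" by simp
qed

lemma lmod_minus:
  assumes "lmodule act" shows "act a (- w) = - act a w" "act a (v - w) = act a v - act a w"
proof -
  have "act a (- w) + act a w = 0" using lmod_simps(2)[OF assms, of a "-w" w] lmod_zero[OF assms] by simp
  then show "act a (- w) = - act a w" by (simp add: eq_neg_iff_add_eq_0)
  then show "act a (v - w) = act a v - act a w" using lmod_simps(2)[OF assms, of a v "-w"] by simp
qed

lemma lmod_sum_r:
  assumes "lmodule act" shows "act a (sum f S) = (\<Sum>x\<in>S. act a (f x))"
  by (induction S rule: infinite_finite_induct) (auto simp: lmod_zero[OF assms] lmod_simps[OF assms])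

lemma lmod_sum_l:
  assumes "lmodule act" shows "act (sum f S) v = (\<Sum>x\<in>S. act (f x) v)"
  by (induction S rule: infinite_finite_induct) (auto simp: lmod_zero[OF assms] lmod_simps[OF assms])

lemma lmod_uminus_l:
  assumes "lmodule act" shows "act (- a) v = - act a v"
proof -
  have "act (- a) v + act a v = 0" using lmod_simps(1)[OF assms, of "-a" a v] lmod_zero[OF assms] by simp
  then show ?thesis by (simp add: eq_neg_iff_add_eq_0)
qed

section \<open>Cochain algebra\<close>

locale ctx =
  fixes iota :: "'f::field \<Rightarrow> 'r::ring_1"
    and actV :: "'r \<Rightarrow> 'v::ab_group_add \<Rightarrow> 'v"
    and actW :: "'r \<Rightarrow> 'w::ab_group_add \<Rightarrow> 'w"
  assumes fa: "falgebra iota" and mV: "lmodule actV" and mW: "lmodule actW"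
begin

lemmas V = lmod_simps[OF mV] lmod_zero[OF mV] lmod_minus[OF mV]
lemmas W = lmod_simps[OF mW] lmod_zero[OF mW] lmod_minus[OF mW]

lemma cochain_add:
  assumes "cochain iota A actV actW n f" "cochain iota A actV actW n g"
  shows "cochain iota A actV actW n (\<lambda>xs v. f xs v + g xs v)"
  using assms unfolding cochain_def by (auto simp: W algebra_simps)

lemma cochain_neg:
  assumes "cochain iota A actV actW n f"
  shows "cochain iota A actV actW n (\<lambda>xs v. - f xs v)"
  using assms unfolding cochain_def by (auto simp: W algebra_simps)

lemma cochain_zero: "cochain iota A actV actW n (\<lambda>xs v. 0)"
  unfolding cochain_def by (auto simp: W)

lemma bar_d_add:
  "bar_d actV actW n (\<lambda>xs v. f xs v + g xs v) xs v = bar_d actV actW n f xs v + bar_d actV actW n g xs v"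
  unfolding bar_d_def by (simp only: W sgnw_add sum.distrib) (simp add: algebra_simps)

lemma bar_d_neg:
  "bar_d actV actW n (\<lambda>xs v. - f xs v) xs v = - bar_d actV actW n f xs v"
  unfolding bar_d_def by (simp only: W sgnw_minus sum_negf) (simp add: algebra_simps)

lemma bar_d_zero:
  "bar_d actV actW n (\<lambda>xs v. 0) xs v = 0"
  unfolding bar_d_def by (simp add: W)

lemma coboundary_add:
  assumes "coboundary iota A actV actW n f" "coboundary iota A actV actW n g"
  shows "coboundary iota A actV actW n (\<lambda>xs v. f xs v + g xs v)"
proof (cases n)
  case 0 then show ?thesis using assms by (auto simp: coboundary_def cochain_add cochain_zero)
next
  case (Suc m)
  from assms Suc obtain f' g' where
    f': "cochain iota A actV actW m f'" "\<forall>xs v. adm A n xs \<longrightarrow> f xs v = bar_d actV actW m f' xs v"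
    and g': "cochain iota A actV actW m g'" "\<forall>xs v. adm A n xs \<longrightarrow> g xs v = bar_d actV actW m g' xs v"
    unfolding coboundary_def by auto
  show ?thesis unfolding coboundary_def Suc
    using assms f' g' Suc
    by (auto simp: coboundary_def cochain_add bar_d_add intro!: exI[of _ "\<lambda>xs v. f' xs v + g' xs v"])
qed

lemma coboundary_neg:
  assumes "coboundary iota A actV actW n f"
  shows "coboundary iota A actV actW n (\<lambda>xs v. - f xs v)"
proof (cases n)
  case 0 then show ?thesis using assms by (auto simp: coboundary_def cochain_neg cochain_zero)
next
  case (Suc m)
  from assms Suc obtain f' where
    f': "cochain iota A actV actW m f'" "\<forall>xs v. adm A n xs \<longrightarrow> f xs v = bar_d actV actW m f' xs v"
    unfolding coboundary_def by auto
  show ?thesis unfolding coboundary_def Suc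
    using assms f' Suc
    by (auto simp: coboundary_def cochain_neg bar_d_neg intro!: exI[of _ "\<lambda>xs v. - f' xs v"])
qed

lemma coboundary_zero: "coboundary iota A actV actW n (\<lambda>xs v. 0)"
  by (cases n) (auto simp: coboundary_def cochain_zero bar_d_zero intro!: exI[of _ "\<lambda>xs v. 0"])

lemma coboundary_cong:
  assumes "coboundary iota A actV actW n f" "\<And>xs v. f xs v = g xs v"
  shows "coboundary iota A actV actW n g"
proof -
  have "f = g" using assms(2) by blast
  then show ?thesis using assms(1) by simp
qed

lemma ext_rel_equiv: "equiv {f. cocycle iota A actV actW n f} (ext_rel iota A actV actW n)"
proof (rule equivI)
  show "ext_rel iota A actV actW n \<subseteq> {f. cocycle iota A actV actW n f} \<times> {f. cocycle iota A actV actW n f}"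
    unfolding ext_rel_def by auto
  show "refl_on {f. cocycle iota A actV actW n f} (ext_rel iota A actV actW n)"
    unfolding refl_on_def ext_rel_def using coboundary_zero by auto
  show "sym (ext_rel iota A actV actW n)"
  proof (rule symI)
    fix f g assume "(f, g) \<in> ext_rel iota A actV actW n"
    then show "(g, f) \<in> ext_rel iota A actV actW n"
      unfolding ext_rel_def
      by (auto elim!: coboundary_cong[OF coboundary_neg])
  qed
  show "trans (ext_rel iota A actV actW n)"
  proof (rule transI)
    fix f g h assume "(f, g) \<in> ext_rel iota A actV actW n" "(g, h) \<in> ext_rel iota A actV actW n"
    then have "coboundary iota A actV actW n (\<lambda>xs v. (f xs v - g xs v) + (g xs v - h xs v))"
      unfolding ext_rel_def by (intro coboundary_add) auto
    then have "coboundary iota A actV actW n (\<lambda>xs v. f xs v - h xs v)"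
      by (rule coboundary_cong) simp
    then show "(f, h) \<in> ext_rel iota A actV actW n"
      using \<open>(f, g) \<in> ext_rel iota A actV actW n\<close> \<open>(g, h) \<in> ext_rel iota A actV actW n\<close>
      unfolding ext_rel_def by auto
  qed
qed

end


definition pull :: "('r \<Rightarrow> 'r) \<Rightarrow> 'r set \<Rightarrow> nat \<Rightarrow> ('r list \<Rightarrow> 'v \<Rightarrow> 'w::zero) \<Rightarrow> 'r list \<Rightarrow> 'v \<Rightarrow> 'w" where
  "pull th A n g = (\<lambda>xs v. if adm A n xs then g (map th xs) v else 0)"

lemma length_merge[simp]: "Suc j < length xs \<Longrightarrow> length (merge j xs) = length xs - 1"
  unfolding merge_def by simp

lemma merge_nth: "Suc j < length xs \<Longrightarrow> i < length xs - 1 \<Longrightarrow>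
   merge j xs ! i = (if i < j then xs ! i else if i = j then xs ! j * xs ! Suc j else xs ! Suc i)"
  unfolding merge_def by (auto simp: nth_append min_def)

lemma set_merge: "Suc j < length xs \<Longrightarrow> set xs \<subseteq> A \<Longrightarrow> (\<forall>x\<in>A. \<forall>y\<in>A. x * y \<in> A) \<Longrightarrow> set (merge j xs) \<subseteq> A"
  unfolding merge_def
  by (auto dest: in_set_takeD in_set_dropD intro!: nth_mem) (meson Suc_lessD nth_mem subsetD)

lemma map_merge: "Suc j < length xs \<Longrightarrow> (\<forall>x\<in>set xs. \<forall>y\<in>set xs. th (x * y) = th x * th y)
  \<Longrightarrow> map th (merge j xs) = merge j (map th xs)"
  unfolding merge_def by (simp add: take_map drop_map)

lemma subalg_closed:
  assumes "subalgebra iota A"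
  shows "\<And>x y. x \<in> A \<Longrightarrow> y \<in> A \<Longrightarrow> x + y \<in> A" "\<And>x y. x \<in> A \<Longrightarrow> y \<in> A \<Longrightarrow> x * y \<in> A"
    "\<And>x. x \<in> A \<Longrightarrow> - x \<in> A" "\<And>c. iota c \<in> A"
  using assms unfolding subalgebra_def by auto

context ctx begin

definition goodmap :: "('r \<Rightarrow> 'r) \<Rightarrow> 'r set \<Rightarrow> 'r set \<Rightarrow> bool" where
  "goodmap th A B \<longleftrightarrow> (\<forall>x\<in>A. th x \<in> B) \<and> (\<forall>x\<in>A. \<forall>y\<in>A. th (x + y) = th x + th y \<and> th (x * y) = th x * th y)
     \<and> (\<forall>c. \<forall>x\<in>A. th (iota c * x) = iota c * th x) \<and> (\<forall>x\<in>A. actV (th x) = actV x \<and> actW (th x) = actW x)"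

lemma pull_cochain:
  assumes A: "subalgebra iota A" and gm: "goodmap th A B" and g: "cochain iota B actV actW n g"
  shows "cochain iota A actV actW n (pull th A n g)"
  unfolding cochain_def
proof (rule conjI)
  show "\<forall>xs v. \<not> adm A n xs \<longrightarrow> pull th A n g xs v = 0" by (simp add: pull_def)
  show "\<forall>xs. adm A n xs \<longrightarrow>
        (\<forall>v v'. pull th A n g xs (v + v') = pull th A n g xs v + pull th A n g xs v') \<and>
        (\<forall>c v. pull th A n g xs (actV (iota c) v) = actW (iota c) (pull th A n g xs v)) \<and>
        (\<forall>i<n. \<forall>y\<in>A. \<forall>v. pull th A n g (xs[i := xs ! i + y]) v = pull th A n g xs v + pull th A n g (xs[i := y]) v) \<and>
        (\<forall>i<n. \<forall>c v. pull th A n g (xs[i := iota c * xs ! i]) v = actW (iota c) (pull th A n g xs v))"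
  proof (intro allI impI)
  fix xs assume ad: "adm A n xs"
  have adB: "adm B n (map th xs)" using ad gm unfolding adm_def goodmap_def by auto
  have gB: "\<forall>v v'. g ys (v + v') = g ys v + g ys v'"
       "\<forall>c v. g ys (actV (iota c) v) = actW (iota c) (g ys v)"
       "\<forall>i<n. \<forall>y\<in>B. \<forall>v. g (ys[i := ys ! i + y]) v = g ys v + g (ys[i := y]) v"
       "\<forall>i<n. \<forall>c v. g (ys[i := iota c * ys ! i]) v = actW (iota c) (g ys v)"
    if "adm B n ys" for ys using g that by (simp_all add: cochain_def)
  have c1: "\<forall>v v'. pull th A n g xs (v + v') = pull th A n g xs v + pull th A n g xs v'"
    using gB(1)[OF adB] ad by (simp add: pull_def)
  have c2: "\<forall>c v. pull th A n g xs (actV (iota c) v) = actW (iota c) (pull th A n g xs v)"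
    using gB(2)[OF adB] ad by (simp add: pull_def)
  have c3: "\<forall>i<n. \<forall>y\<in>A. \<forall>v. pull th A n g (xs[i := xs ! i + y]) v = pull th A n g xs v + pull th A n g (xs[i := y]) v"
  proof (intro allI impI ballI)
    fix i y v assume i: "i < n" and y: "y \<in> A"
    have xi: "xs ! i \<in> A" using ad i unfolding adm_def by auto
    have a1: "adm A n (xs[i := xs ! i + y])" "adm A n (xs[i := y])"
      using ad xi y subalg_closed[OF A] unfolding adm_def by (auto dest!: set_update_subset_insert[THEN subsetD])
    have "map th (xs[i := xs ! i + y]) = (map th xs)[i := map th xs ! i + th y]"
      using gm xi y i ad unfolding goodmap_def adm_def by (simp add: map_update)
    moreover have "th y \<in> B" using gm y unfolding goodmap_def by auto
    ultimately show "pull th A n g (xs[i := xs ! i + y]) v = pull th A n g xs v + pull th A n g (xs[i := y]) v"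
      using gB(3)[OF adB] a1 ad i by (simp add: pull_def map_update)
  qed
  have c4: "\<forall>i<n. \<forall>c v. pull th A n g (xs[i := iota c * xs ! i]) v = actW (iota c) (pull th A n g xs v)"
  proof (intro allI impI)
    fix i c v assume i: "i < n"
    have xi: "xs ! i \<in> A" using ad i unfolding adm_def by auto
    have a1: "adm A n (xs[i := iota c * xs ! i])"
      using ad xi subalg_closed[OF A] unfolding adm_def by (auto dest!: set_update_subset_insert[THEN subsetD])
    have "map th (xs[i := iota c * xs ! i]) = (map th xs)[i := iota c * map th xs ! i]"
      using gm xi i ad unfolding goodmap_def adm_def by (simp add: map_update)
    then show "pull th A n g (xs[i := iota c * xs ! i]) v = actW (iota c) (pull th A n g xs v)"
      using gB(4)[OF adB] a1 ad i by (simp add: pull_def)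
  qed
  show "(\<forall>v v'. pull th A n g xs (v + v') = pull th A n g xs v + pull th A n g xs v') \<and>
        (\<forall>c v. pull th A n g xs (actV (iota c) v) = actW (iota c) (pull th A n g xs v)) \<and>
        (\<forall>i<n. \<forall>y\<in>A. \<forall>v. pull th A n g (xs[i := xs ! i + y]) v = pull th A n g xs v + pull th A n g (xs[i := y]) v) \<and>
        (\<forall>i<n. \<forall>c v. pull th A n g (xs[i := iota c * xs ! i]) v = actW (iota c) (pull th A n g xs v))"
    using c1 c2 c3 c4 by blast
  qed
qed

lemma pull_bar_d:
  assumes A: "subalgebra iota A" and gm: "goodmap th A B" and ad: "adm A (Suc n) xs"
  shows "bar_d actV actW n (pull th A n g) xs v = bar_d actV actW n g (map th xs) v"
proof -
  have len: "length xs = Suc n" and sA: "set xs \<subseteq> A" using ad unfolding adm_def by auto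
  have ne: "xs \<noteq> []" using len by auto
  have hdA: "hd xs \<in> A" using ne sA by auto
  have lastA: "last xs \<in> A" using ne sA by auto
  have t1: "pull th A n g (tl xs) v = g (tl (map th xs)) v"
    using len sA by (auto simp: pull_def adm_def map_tl dest!: list.set_sel(2)[rotated])
  have t1': "actW (hd xs) = actW (hd (map th xs))" using gm hdA ne unfolding goodmap_def by (simp add: hd_map)
  have t3: "pull th A n g (butlast xs) w = g (butlast (map th xs)) w" for w
    using len sA by (auto simp: pull_def adm_def map_butlast dest: in_set_butlastD)
  have t3': "actV (last xs) = actV (last (map th xs))" using gm lastA ne unfolding goodmap_def by (simp add: last_map)
  have t2: "pull th A n g (merge j xs) v = g (merge j (map th xs)) v" if j: "j < n" for j
  proof -
    have "adm A n (merge j xs)" using len sA j subalg_closed[OF A] set_merge[of j xs A] unfolding adm_def by auto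
    moreover have "map th (merge j xs) = merge j (map th xs)"
      using j len sA gm unfolding goodmap_def by (intro map_merge) (auto, blast)
    ultimately show ?thesis by (simp add: pull_def)
  qed
  show ?thesis unfolding bar_d_def using t1 t1' t2 t3 t3' by simp
qed

lemma pull_cocycle:
  assumes A: "subalgebra iota A" and gm: "goodmap th A B" and g: "cocycle iota B actV actW n g"
  shows "cocycle iota A actV actW n (pull th A n g)"
  unfolding cocycle_def
proof (intro conjI allI impI)
  show "cochain iota A actV actW n (pull th A n g)" using pull_cochain[OF A gm] g unfolding cocycle_def by auto
  fix xs v assume ad: "adm A (Suc n) xs"
  have "adm B (Suc n) (map th xs)" using ad gm unfolding adm_def goodmap_def by auto
  then show "bar_d actV actW n (pull th A n g) xs v = 0"
    using pull_bar_d[OF A gm ad] g unfolding cocycle_def by simp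
qed

lemma pull_coboundary:
  assumes A: "subalgebra iota A" and gm: "goodmap th A B" and g: "coboundary iota B actV actW n g"
  shows "coboundary iota A actV actW n (pull th A n g)"
proof (cases n)
  case 0
  then show ?thesis using g pull_cochain[OF A gm] unfolding coboundary_def by (auto simp: pull_def fun_eq_iff)
next
  case (Suc m)
  from g Suc obtain h where h: "cochain iota B actV actW m h"
    "\<forall>xs v. adm B n xs \<longrightarrow> g xs v = bar_d actV actW m h xs v"
    unfolding coboundary_def by auto
  have "\<forall>xs v. adm A n xs \<longrightarrow> pull th A n g xs v = bar_d actV actW m (pull th A m h) xs v"
  proof (intro allI impI)
    fix xs v assume ad: "adm A n xs"
    have "adm B n (map th xs)" using ad gm unfolding adm_def goodmap_def by auto
    then show "pull th A n g xs v = bar_d actV actW m (pull th A m h) xs v"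
      using pull_bar_d[OF A gm, of m xs] ad h Suc by (simp add: pull_def)
  qed
  moreover have "cochain iota A actV actW n (pull th A n g)" using pull_cochain[OF A gm] g unfolding coboundary_def by auto
  ultimately show ?thesis unfolding coboundary_def Suc
    using pull_cochain[OF A gm h(1)] Suc by auto
qed

lemma pull_diff: fixes f g :: "'r list \<Rightarrow> 'v \<Rightarrow> 'w" shows "pull th A n (\<lambda>xs v. f xs v - g xs v) = (\<lambda>xs v. pull th A n f xs v - pull th A n g xs v)"
  by (auto simp: pull_def fun_eq_iff)

lemma pull_rel:
  assumes A: "subalgebra iota A" and gm: "goodmap th A B" and fg: "(f, g) \<in> ext_rel iota B actV actW n"
  shows "(pull th A n f, pull th A n g) \<in> ext_rel iota A actV actW n"
  using fg pull_coboundary[OF A gm, of n "\<lambda>xs v. f xs v - g xs v"] pull_cocycle[OF A gm]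
  unfolding ext_rel_def by (auto simp: pull_diff)

lemma pull_comp:
  assumes "\<forall>x\<in>A. th1 x \<in> B"
  shows "pull th1 A n (pull th2 B n g) = pull (th2 \<circ> th1) A n g"
  using assms by (auto simp: pull_def fun_eq_iff adm_def)

lemma pull_cong:
  assumes "\<forall>x\<in>A. th x = th' x"
  shows "pull th A n g = pull th' A n g"
proof -
  have "map th xs = map th' xs" if "set xs \<subseteq> A" for xs using assms that by (auto intro!: map_cong)
  then show ?thesis unfolding pull_def adm_def fun_eq_iff by metis
qed

lemma pull_id_res:
  assumes "cochain iota UNIV actV actW n f"
  shows "pull id A n f = res_cochain A f"
  using assms by (auto simp: pull_def fun_eq_iff adm_def res_cochain_def cochain_def)

end


lemma sgnw_if: "sgnw k w = (if even k then w else - (w::'w::ab_group_add))" by (simp add: sgnw_def)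

lemma Msum:
  fixes G :: "nat \<Rightarrow> nat \<Rightarrow> 'w::ab_group_add"
  assumes k: "k \<le> Suc m"
  shows "(\<Sum>j<Suc m. sgnw (Suc j) (if Suc j < k then G (k-1) j else if Suc j = k then Qv k
            else if j = k then Qv (Suc k) else G k (j-1)))
   = (\<Sum>j<k-1. sgnw (Suc j) (G (k-1) j)) + (\<Sum>j\<in>{k..<m}. sgnw j (G k j))
     + (if 0<k then sgnw k (Qv k) else 0) - (if k < Suc m then sgnw k (Qv (Suc k)) else 0)"
proof (cases k)
  case 0
  have "(\<Sum>j<Suc m. sgnw (Suc j) (if Suc j < k then G (k-1) j else if Suc j = k then Qv k
            else if j = k then Qv (Suc k) else G k (j-1)))
      = sgnw 1 (Qv 1) + (\<Sum>j<m. sgnw (Suc (Suc j)) (G 0 j))"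
    using 0 by (simp add: sum.lessThan_Suc_shift del: sum.lessThan_Suc)
  also have "\<dots> = - Qv 1 + (\<Sum>j\<in>{0..<m}. sgnw j (G 0 j))"
    by (simp add: lessThan_atLeast0)
  finally show ?thesis using 0 by simp
next
  case (Suc k')
  let ?F = "\<lambda>j. sgnw (Suc j) (if Suc j < k then G (k-1) j else if Suc j = k then Qv k
            else if j = k then Qv (Suc k) else G k (j-1))"
  have k': "k' \<le> m" using k Suc by simp
  have s1: "(\<Sum>j<Suc m. ?F j) = (\<Sum>j\<in>{0..<k'}. ?F j) + (\<Sum>j\<in>{k'..<Suc m}. ?F j)"
    using k' by (simp only: lessThan_atLeast0 sum.atLeastLessThan_concat[OF le0 le_SucI[OF k']])
  have s2: "(\<Sum>j\<in>{0..<k'}. ?F j) = (\<Sum>j<k-1. sgnw (Suc j) (G (k-1) j))"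
    using Suc by (simp add: lessThan_atLeast0)
  have s3: "(\<Sum>j\<in>{k'..<Suc m}. ?F j) = ?F k' + (\<Sum>j\<in>{Suc k'..<Suc m}. ?F j)"
    using k' by (intro sum.atLeast_Suc_lessThan) simp
  have s4: "?F k' = sgnw k (Qv k)" using Suc by simp
  have s5: "(\<Sum>j\<in>{Suc k'..<Suc m}. ?F j) = (\<Sum>j\<in>{k'..<m}. ?F (Suc j))"
    by (simp only: sum.shift_bounds_Suc_ivl)
  have s6: "(\<Sum>j\<in>{k'..<m}. ?F (Suc j)) = (if k < Suc m then - sgnw k (Qv (Suc k)) else 0) + (\<Sum>j\<in>{k..<m}. sgnw j (G k j))"
  proof (cases "k' < m")
    case True
    then have "(\<Sum>j\<in>{k'..<m}. ?F (Suc j)) = ?F (Suc k') + (\<Sum>j\<in>{Suc k'..<m}. ?F (Suc j))"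
      by (intro sum.atLeast_Suc_lessThan)
    moreover have "(\<Sum>j\<in>{Suc k'..<m}. ?F (Suc j)) = (\<Sum>j\<in>{k..<m}. sgnw j (G k j))"
      using Suc by (intro sum.cong) (auto simp: sgnw_if)
    ultimately show ?thesis using True Suc by (simp add: sgnw_if)
  next
    case False
    then show ?thesis using Suc k' by simp
  qed
  have eq: "(\<Sum>j<Suc m. ?F j) = (\<Sum>j<k-1. sgnw (Suc j) (G (k-1) j)) + (sgnw k (Qv k) + ((if k < Suc m then - sgnw k (Qv (Suc k)) else 0) + (\<Sum>j\<in>{k..<m}. sgnw j (G k j))))"
    by (simp only: s1 s2 s3 s4 s5 s6)
  show ?thesis unfolding eq using Suc by (simp add: algebra_simps)
qed


lemma aux_ab: "0 = (a - b) + D + (- c - d) \<Longrightarrow> b + - D + c = a - (d::'a::ab_group_add)"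
proof -
  assume h: "0 = (a - b) + D + (- c - d)"
  have "a - d = ((a - b) + D + (- c - d)) + (b + - D + c)" by (simp add: algebra_simps)
  then show ?thesis using h by simp
qed

context ctx begin

lemma actW_sgnw: "actW a (sgnw k w) = sgnw k (actW a w)"
  by (simp add: sgnw_def W)

lemma prism_alg:
  fixes A Mk L H B Qv :: "nat \<Rightarrow> 'w" and G :: "nat \<Rightarrow> nat \<Rightarrow> 'w"
  assumes T: "\<forall>k \<le> Suc m. A k + Mk k + L k = 0"
  and A0: "A 0 = fx" and AS: "\<forall>k \<le> m. A (Suc k) = actW x0 (H k)"
  and LS: "\<forall>k \<le> m. L k = sgnw (Suc (Suc m)) (B k)" and Ln: "L (Suc m) = sgnw (Suc (Suc m)) fth"
  and MS: "\<forall>k \<le> Suc m. Mk k = (\<Sum>j<k-1. sgnw (Suc j) (G (k-1) j)) + (\<Sum>j\<in>{k..<m}. sgnw j (G k j))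
       + (if 0<k then sgnw k (Qv k) else 0) - (if k < Suc m then sgnw k (Qv (Suc k)) else 0)"
  shows "actW x0 (\<Sum>k\<le>m. sgnw k (H k)) + (\<Sum>j<m. sgnw (Suc j) (\<Sum>k\<le>m. sgnw k (G k j)))
     + sgnw (Suc m) (\<Sum>k\<le>m. sgnw k (B k)) = fx - fth"
proof -
  define DD where "DD = (\<Sum>k\<le>m. \<Sum>j<m. sgnw (k+j) (G k j))"
  have "0 = (\<Sum>k\<le>Suc m. sgnw k (A k + Mk k + L k))" using T by simp
  also have "\<dots> = (\<Sum>k\<le>Suc m. sgnw k (A k)) + (\<Sum>k\<le>Suc m. sgnw k (Mk k)) + (\<Sum>k\<le>Suc m. sgnw k (L k))"
    by (simp add: sgnw_add sum.distrib)
  finally have tot: "0 = (\<Sum>k\<le>Suc m. sgnw k (A k)) + (\<Sum>k\<le>Suc m. sgnw k (Mk k)) + (\<Sum>k\<le>Suc m. sgnw k (L k))" .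
  have SA: "(\<Sum>k\<le>Suc m. sgnw k (A k)) = fx - actW x0 (\<Sum>k\<le>m. sgnw k (H k))"
  proof -
    have "(\<Sum>k\<le>Suc m. sgnw k (A k)) = A 0 + (\<Sum>k\<le>m. sgnw (Suc k) (A (Suc k)))"
      by (simp only: sum.atMost_Suc_shift) simp
    also have "(\<Sum>k\<le>m. sgnw (Suc k) (A (Suc k))) = - (\<Sum>k\<le>m. actW x0 (sgnw k (H k)))"
      using AS by (simp add: sum_negf actW_sgnw)
    finally show ?thesis using A0 by (simp add: lmod_sum_r[OF mW])
  qed
  have SL: "(\<Sum>k\<le>Suc m. sgnw k (L k)) = - sgnw (Suc m) (\<Sum>k\<le>m. sgnw k (B k)) - fth"
  proof -
    have "(\<Sum>k\<le>Suc m. sgnw k (L k)) = (\<Sum>k\<le>m. sgnw k (L k)) + sgnw (Suc m) (L (Suc m))"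
      by simp
    also have "(\<Sum>k\<le>m. sgnw k (L k)) = (\<Sum>k\<le>m. - sgnw (Suc m) (sgnw k (B k)))"
      using LS by (intro sum.cong) (auto simp: sgnw_def)
    also have "sgnw (Suc m) (L (Suc m)) = - fth" using Ln by (simp add: sgnw_def)
    finally show ?thesis by (simp add: sum_negf sgnw_sum)
  qed
  have h1: "(\<Sum>k\<le>Suc m. sgnw k (\<Sum>j<k-1. sgnw (Suc j) (G (k-1) j))) = (\<Sum>k\<le>m. \<Sum>j<k. sgnw (k+j) (G k j))"
  proof -
    have "(\<Sum>k\<le>Suc m. sgnw k (\<Sum>j<k-1. sgnw (Suc j) (G (k-1) j)))
        = (\<Sum>k\<le>m. sgnw (Suc k) (\<Sum>j<k. sgnw (Suc j) (G k j)))"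
      by (simp only: sum.atMost_Suc_shift) simp
    also have "\<dots> = (\<Sum>k\<le>m. \<Sum>j<k. sgnw (k+j) (G k j))"
      by (simp add: sgnw_sum sgnw_minus sgnw_sgnw)
    finally show ?thesis .
  qed
  have h2: "(\<Sum>k\<le>Suc m. sgnw k (\<Sum>j\<in>{k..<m}. sgnw j (G k j))) = (\<Sum>k\<le>m. \<Sum>j\<in>{k..<m}. sgnw (k+j) (G k j))"
    by (simp add: sgnw_sum sgnw_sgnw)
  have h3: "(\<Sum>k\<le>m. \<Sum>j<k. sgnw (k+j) (G k j)) + (\<Sum>k\<le>m. \<Sum>j\<in>{k..<m}. sgnw (k+j) (G k j)) = DD"
    unfolding DD_def sum.distrib[symmetric]
  proof (intro sum.cong refl)
    fix k assume "k \<in> {..m}"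
    then have "k \<le> m" by simp
    then show "(\<Sum>j<k. sgnw (k+j) (G k j)) + (\<Sum>j\<in>{k..<m}. sgnw (k+j) (G k j)) = (\<Sum>j<m. sgnw (k+j) (G k j))"
      by (simp only: lessThan_atLeast0 sum.atLeastLessThan_concat[OF le0])
  qed
  have h4: "(\<Sum>k\<le>Suc m. sgnw k (if 0<k then sgnw k (Qv k) else 0)) = (\<Sum>k\<le>m. Qv (Suc k))"
    by (simp only: sum.atMost_Suc_shift) (simp add: sgnw_minus sgnw_sgnw sgnw_double)
  have h5: "(\<Sum>k\<le>Suc m. sgnw k (if k < Suc m then sgnw k (Qv (Suc k)) else 0)) = (\<Sum>k\<le>m. Qv (Suc k))"
    by (simp add: sgnw_sgnw sgnw_double)
  have SM: "(\<Sum>k\<le>Suc m. sgnw k (Mk k)) = DD"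
  proof -
    have "(\<Sum>k\<le>Suc m. sgnw k (Mk k)) = (\<Sum>k\<le>Suc m. sgnw k (\<Sum>j<k-1. sgnw (Suc j) (G (k-1) j)))
      + (\<Sum>k\<le>Suc m. sgnw k (\<Sum>j\<in>{k..<m}. sgnw j (G k j)))
      + (\<Sum>k\<le>Suc m. sgnw k (if 0<k then sgnw k (Qv k) else 0))
      - (\<Sum>k\<le>Suc m. sgnw k (if k < Suc m then sgnw k (Qv (Suc k)) else 0))"
      using MS by (simp add: sgnw_add sgnw_diff sum.distrib sum_subtractf)
    then show ?thesis using h1 h2 h3 h4 h5 by simp
  qed
  have h6: "(\<Sum>j<m. sgnw (Suc j) (\<Sum>k\<le>m. sgnw k (G k j))) = - DD"
    unfolding DD_def by (simp add: sgnw_sum sgnw_sgnw sum_negf sum.swap[of _ "{..m}"] add.commute)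
  have tot2: "0 = (fx - actW x0 (\<Sum>k\<le>m. sgnw k (H k))) + DD + (- sgnw (Suc m) (\<Sum>k\<le>m. sgnw k (B k)) - fth)"
    using tot unfolding SA SL SM .
  show ?thesis unfolding h6 using tot2
    by (rule aux_ab)
qed

end


definition Pl :: "'r::ring_1 \<Rightarrow> nat \<Rightarrow> 'r list \<Rightarrow> 'r list" where
  "Pl u k xs = map (\<lambda>x. x * u) (take k xs) @ u # drop k xs"
definition Ql :: "'r::ring_1 \<Rightarrow> nat \<Rightarrow> 'r list \<Rightarrow> 'r list" where
  "Ql u k xs = map (\<lambda>x. x * u) (take k xs) @ drop k xs"

lemma length_Pl[simp]: "length (Pl u k xs) = Suc (length xs)"
  by (simp add: Pl_def)
lemma length_Ql[simp]: "length (Ql u k xs) = length xs"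
  by (simp add: Ql_def)

lemma Pl_nth: "k \<le> length xs \<Longrightarrow> i \<le> length xs \<Longrightarrow>
  Pl u k xs ! i = (if i < k then xs ! i * u else if i = k then u else xs ! (i - 1))"
  by (auto simp: Pl_def nth_append min_def nth_Cons')
lemma Ql_nth: "i < length xs \<Longrightarrow>
  Ql u k xs ! i = (if i < k then xs ! i * u else xs ! i)"
  by (auto simp: Ql_def nth_append min_def)

lemma Pl_0[simp]: "Pl u 0 xs = u # xs" by (simp add: Pl_def)
lemma Pl_Suc_Cons[simp]: "Pl u (Suc k) (x # xs) = (x * u) # Pl u k xs" by (simp add: Pl_def)
lemma Pl_len: "Pl u (length xs) xs = map (\<lambda>x. x * u) xs @ [u]" by (simp add: Pl_def)
lemma Ql_len: "Ql u (length xs) xs = map (\<lambda>x. x * u) xs" by (simp add: Ql_def)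
lemma Pl_last: "k < length xs \<Longrightarrow> last (Pl u k xs) = last xs"
  by (simp add: Pl_def last_drop)
lemma Pl_butlast: "k < length xs \<Longrightarrow> butlast (Pl u k xs) = Pl u k (butlast xs)"
  by (simp add: Pl_def butlast_append take_butlast butlast_drop)

lemma set_Pl: "set xs \<subseteq> A \<Longrightarrow> u \<in> A \<Longrightarrow> (\<forall>x\<in>A. x * u \<in> A) \<Longrightarrow> set (Pl u k xs) \<subseteq> A"
  by (auto simp: Pl_def dest: in_set_takeD in_set_dropD)

locale uctx = ctx iota actV actW for iota :: "'f::field \<Rightarrow> 'r::ring_1"
    and actV :: "'r \<Rightarrow> 'v::ab_group_add \<Rightarrow> 'v" and actW :: "'r \<Rightarrow> 'w::ab_group_add \<Rightarrow> 'w" +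
  fixes A :: "'r set" and u :: 'r
  assumes A: "subalgebra iota A" and uA: "u \<in> A" and uu: "u * u = u" and uc: "\<And>x. u * x = x * u"
    and uV: "\<And>v. actV u v = v" and uW: "\<And>w. actW u w = w"
begin

lemma uprod: "(a * u) * (b * u) = (a * b) * u"
proof -
  have "(a * u) * (b * u) = a * (u * b) * u" by (simp add: mult.assoc)
  also have "\<dots> = a * (b * u) * u" by (simp only: uc[of b])
  also have "\<dots> = a * b * (u * u)" by (simp add: mult.assoc)
  finally show ?thesis using uu by simp
qed

lemma uprod2: "(a * u) * u = a * u" "u * b = b * u"
  using uu uc[of b] by (simp_all add: mult.assoc)

lemma merge_Pl:
  assumes j: "j < length xs" and k: "k \<le> length xs"
  shows "merge j (Pl u k xs) = (if Suc j < k then Pl u (k-1) (merge j xs) else if Suc j = k then Ql u k xs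
            else if j = k then Ql u (Suc k) xs else Pl u k (merge (j-1) xs))"
proof -
  have l1: "length (merge j (Pl u k xs)) = length xs" using j by simp
  have mP: "merge j (Pl u k xs) ! i = (if i < j then Pl u k xs ! i else if i = j then Pl u k xs ! j * Pl u k xs ! Suc j else Pl u k xs ! Suc i)"
    if "i < length xs" for i using that j by (simp add: merge_nth)
  show ?thesis
  proof (cases "Suc j < k")
    case True
    have "merge j (Pl u k xs) ! i = Pl u (k-1) (merge j xs) ! i" if i: "i < length xs" for i
    proof -
      have m: "merge j xs ! i' = (if i' < j then xs ! i' else if i' = j then xs ! j * xs ! Suc j else xs ! Suc i')"
        if "i' < length xs - 1" for i' using that True k by (simp add: merge_nth)
      have p2: "Pl u (k-1) (merge j xs) ! i = (if i < k - 1 then merge j xs ! i * u else if i = k - 1 then u else merge j xs ! (i - 1))"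
        using True k i by (subst Pl_nth) auto
      have li: "length xs - 1 = length (merge j xs)" using True k by simp
      consider "i < j" | "i = j" | "j < i" "i < k - 1" | "i = k - 1" | "k - 1 < i" by linarith
      then show ?thesis
      proof cases
        case 1
        then have "i < k - 1" "i < k" "i < length xs - 1" using True k by auto
        then show ?thesis unfolding mP[OF i] p2 using i True k m[of i] 1 by (simp add: Pl_nth)
      next
        case 2
        then have "i < k - 1" "Suc i < k" "i < length xs - 1" using True k by auto
        then show ?thesis unfolding mP[OF i] p2 using i True k m[of i] 2 by (simp add: Pl_nth uprod)
      next
        case 3
        then have "i < k - 1" "Suc i < k" "i < length xs - 1" "\<not> i < j" "i \<noteq> j" using True k by auto
        then show ?thesis unfolding mP[OF i] p2 using i True k m[of i] by (simp add: Pl_nth)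
      next
        case 4
        then have "\<not> i < k - 1" "Suc i = k" "\<not> i < j" "i \<noteq> j" using True k by auto
        then show ?thesis unfolding mP[OF i] p2 using i True k 4 by (simp add: Pl_nth)
      next
        case 5
        then have "\<not> i < k - 1" "i \<noteq> k - 1" "k < Suc i" "\<not> i < j" "i \<noteq> j" "i - 1 < length xs - 1"
           "\<not> i - 1 < j" "i - 1 \<noteq> j" "Suc (i - 1) = i" using True i k by auto
        then show ?thesis unfolding mP[OF i] p2 using i True k m[of "i - 1"] by (simp add: Pl_nth)
      qed
    qed
    then show ?thesis using True l1 k by (intro nth_equalityI) auto
  next
    case F1: False
    show ?thesis
    proof (cases "Suc j = k")
      case True
      have "merge j (Pl u k xs) ! i = Ql u k xs ! i" if i: "i < length xs" for i
      proof -
        consider "i < j" | "i = j" | "j < i" by linarith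
        then show ?thesis
        proof cases
          case 1 then have "i < k" using True by simp
          then show ?thesis unfolding mP[OF i] using i True k 1 by (simp add: Pl_nth Ql_nth)
        next
          case 2 then have "i < k" "Suc i = k" using True by simp_all
          then show ?thesis unfolding mP[OF i] using i True k 2 by (simp add: Pl_nth Ql_nth uprod2)
        next
          case 3 then have "\<not> i < k" "\<not> Suc i < k" "Suc i \<noteq> k" "\<not> i < j" "i \<noteq> j" using True by simp_all
          then show ?thesis unfolding mP[OF i] using i True k by (simp add: Pl_nth Ql_nth)
        qed
      qed
      then show ?thesis using True l1 by (intro nth_equalityI) auto
    next
      case F2: False
      show ?thesis
      proof (cases "j = k")
        case True
        have "merge j (Pl u k xs) ! i = Ql u (Suc k) xs ! i" if i: "i < length xs" for i
        proof -
          consider "i < j" | "i = j" | "j < i" by linarith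
          then show ?thesis
          proof cases
            case 1 then have "i < k" "i < Suc k" using True by simp_all
            then show ?thesis unfolding mP[OF i] using i True k 1 by (simp add: Pl_nth Ql_nth)
          next
            case 2 then have "\<not> i < k" "i = k" "i < Suc k" using True by simp_all
            then show ?thesis unfolding mP[OF i] using i True k j 2 by (simp add: Pl_nth Ql_nth uprod2)
          next
            case 3 then have "\<not> i < k" "\<not> Suc i < k" "Suc i \<noteq> k" "\<not> i < j" "i \<noteq> j" "\<not> i < Suc k" using True by simp_all
            then show ?thesis unfolding mP[OF i] using i True k by (simp add: Pl_nth Ql_nth)
          qed
        qed
        then show ?thesis using True l1 F1 F2 by (intro nth_equalityI) auto
      next
        case F3: False
        have jk: "k < j" using F1 F2 F3 by simp
        have "merge j (Pl u k xs) ! i = Pl u k (merge (j-1) xs) ! i" if i: "i < length xs" for i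
        proof -
          have m: "merge (j-1) xs ! i' = (if i' < j-1 then xs ! i' else if i' = j-1 then xs ! (j-1) * xs ! j else xs ! Suc i')"
            if "i' < length xs - 1" for i' using that jk j by (simp add: merge_nth)
          have p2: "Pl u k (merge (j-1) xs) ! i = (if i < k then merge (j-1) xs ! i * u else if i = k then u else merge (j-1) xs ! (i - 1))"
            using jk j k i by (subst Pl_nth) auto
          consider "i < k" | "i = k" | "k < i" "i < j" | "i = j" | "j < i" by linarith
          then show ?thesis
          proof cases
            case 1
            then have "i < j" "i < j - 1" "i < length xs - 1" using jk j k by auto
            then show ?thesis unfolding mP[OF i] p2 using i jk k j m[of i] 1 by (simp add: Pl_nth)
          next
            case 2
            then show ?thesis unfolding mP[OF i] p2 using i jk k j by (simp add: Pl_nth)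
          next
            case 3
            then have "i - 1 < j - 1" "i - 1 < length xs - 1" "Suc (i - 1) = i" "\<not> i < k" "i \<noteq> k" using jk j k by auto
            then show ?thesis unfolding mP[OF i] p2 using i jk k j m[of "i - 1"] 3 by (simp add: Pl_nth)
          next
            case 4
            then have "i - 1 = j - 1" "i - 1 < length xs - 1" "Suc (i - 1) = i" "\<not> i < k" "i \<noteq> k" using jk i j k by auto
            then show ?thesis unfolding mP[OF i] p2 using i jk k j m[of "i - 1"] 4 by (simp add: Pl_nth)
          next
            case 5
            then have "\<not> i - 1 < j - 1" "i - 1 \<noteq> j - 1" "i - 1 < length xs - 1" "Suc (i - 1) = i" "\<not> i < k" "i \<noteq> k" "\<not> i < j" "i \<noteq> j" using jk i j k by auto
            then show ?thesis unfolding mP[OF i] p2 using i jk k j m[of "i - 1"] by (simp add: Pl_nth)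
          qed
        qed
        then show ?thesis using F1 F2 F3 l1 jk j by (intro nth_equalityI) auto
      qed
    qed
  qed
qed

lemma Pl_update:
  assumes i: "i < length ys" and k: "k \<le> length ys"
  shows "Pl u k (ys[i := a]) = (if i < k then (Pl u k ys)[i := a * u] else (Pl u k ys)[Suc i := a])"
proof (cases "i < k")
  case True
  show ?thesis using True i k
    by (intro nth_equalityI) (auto simp: Pl_nth nth_list_update)
next
  case False
  show ?thesis using False i k
    by (intro nth_equalityI) (auto simp: Pl_nth nth_list_update)
qed

lemma uA_closed: "x \<in> A \<Longrightarrow> x * u \<in> A"
  using subalg_closed[OF A] uA by auto

lemma adm_Pl: "adm A m ys \<Longrightarrow> adm A (Suc m) (Pl u k ys)"
  unfolding adm_def using set_Pl[of ys A u k] uA uA_closed by auto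

definition prism :: "nat \<Rightarrow> ('r list \<Rightarrow> 'v \<Rightarrow> 'w) \<Rightarrow> 'r list \<Rightarrow> 'v \<Rightarrow> 'w" where
  "prism m f = (\<lambda>ys v. if adm A m ys then (\<Sum>k\<le>m. sgnw k (f (Pl u k ys) v)) else 0)"

lemma prism_slot:
  assumes f: "cochain iota A actV actW (Suc m) f" and ad: "adm A m ys" and k: "k \<le> m" and i: "i < m" and y: "y \<in> A"
  shows "f (Pl u k (ys[i := ys ! i + y])) v = f (Pl u k ys) v + f (Pl u k (ys[i := y])) v"
    "f (Pl u k (ys[i := iota c * ys ! i])) v = actW (iota c) (f (Pl u k ys) v)"
proof -
  have len: "length ys = m" using ad by (simp add: adm_def)
  have adP: "adm A (Suc m) (Pl u k ys)" using adm_Pl[OF ad] .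
  have fs: "\<forall>i<Suc m. \<forall>y\<in>A. \<forall>v. f ((Pl u k ys)[i := (Pl u k ys) ! i + y]) v = f (Pl u k ys) v + f ((Pl u k ys)[i := y]) v"
    "\<forall>i<Suc m. \<forall>c v. f ((Pl u k ys)[i := iota c * (Pl u k ys) ! i]) v = actW (iota c) (f (Pl u k ys) v)"
    using f adP unfolding cochain_def by blast+
  have yu: "y * u \<in> A" using uA_closed[OF y] .
  show "f (Pl u k (ys[i := ys ! i + y])) v = f (Pl u k ys) v + f (Pl u k (ys[i := y])) v"
  proof (cases "i < k")
    case True
    have "Pl u k ys ! i = ys ! i * u" using True k len i by (simp add: Pl_nth)
    moreover have "i < Suc m" using i by simp
    ultimately show ?thesis using fs(1)[rule_format, of i "y * u" v] True i k len yu by (simp add: Pl_update distrib_right)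
  next
    case False
    have "Pl u k ys ! Suc i = ys ! i" using False k len i by (simp add: Pl_nth)
    moreover have "Suc i < Suc m" using i by simp
    ultimately show ?thesis using fs(1)[rule_format, of "Suc i" y v] False i k len y by (simp add: Pl_update)
  qed
  show "f (Pl u k (ys[i := iota c * ys ! i])) v = actW (iota c) (f (Pl u k ys) v)"
  proof (cases "i < k")
    case True
    have "Pl u k ys ! i = ys ! i * u" using True k len i by (simp add: Pl_nth)
    moreover have "i < Suc m" using i by simp
    ultimately show ?thesis using fs(2)[rule_format, of i c v] True i k len by (simp add: Pl_update mult.assoc)
  next
    case False
    have "Pl u k ys ! Suc i = ys ! i" using False k len i by (simp add: Pl_nth)
    moreover have "Suc i < Suc m" using i by simp
    ultimately show ?thesis using fs(2)[rule_format, of "Suc i" c v] False i k len by (simp add: Pl_update)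
  qed
qed

lemma prism_cochain:
  assumes f: "cochain iota A actV actW (Suc m) f"
  shows "cochain iota A actV actW m (prism m f)"
  unfolding cochain_def
proof (rule conjI)
  show "\<forall>xs v. \<not> adm A m xs \<longrightarrow> prism m f xs v = 0" by (simp add: prism_def)
  show "\<forall>xs. adm A m xs \<longrightarrow>
        (\<forall>v v'. prism m f xs (v + v') = prism m f xs v + prism m f xs v') \<and>
        (\<forall>c v. prism m f xs (actV (iota c) v) = actW (iota c) (prism m f xs v)) \<and>
        (\<forall>i<m. \<forall>y\<in>A. \<forall>v. prism m f (xs[i := xs ! i + y]) v = prism m f xs v + prism m f (xs[i := y]) v) \<and>
        (\<forall>i<m. \<forall>c v. prism m f (xs[i := iota c * xs ! i]) v = actW (iota c) (prism m f xs v))"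
  proof (intro allI impI)
    fix xs assume ad: "adm A m xs"
    have fk: "\<forall>v v'. f (Pl u k xs) (v + v') = f (Pl u k xs) v + f (Pl u k xs) v'"
      "\<forall>c v. f (Pl u k xs) (actV (iota c) v) = actW (iota c) (f (Pl u k xs) v)" for k
      using f adm_Pl[OF ad, of k] unfolding cochain_def by blast+
    have c1: "\<forall>v v'. prism m f xs (v + v') = prism m f xs v + prism m f xs v'"
      using ad fk(1) by (simp add: prism_def sgnw_add sum.distrib)
    have c2: "\<forall>c v. prism m f xs (actV (iota c) v) = actW (iota c) (prism m f xs v)"
      using ad fk(2) by (simp add: prism_def lmod_sum_r[OF mW] actW_sgnw)
    have c3: "\<forall>i<m. \<forall>y\<in>A. \<forall>v. prism m f (xs[i := xs ! i + y]) v = prism m f xs v + prism m f (xs[i := y]) v"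
    proof (intro allI impI ballI)
      fix i y v assume i: "i < m" and y: "y \<in> A"
      have xi: "xs ! i \<in> A" using ad i unfolding adm_def by auto
      have a1: "adm A m (xs[i := xs ! i + y])" "adm A m (xs[i := y])"
        using ad xi y subalg_closed[OF A] unfolding adm_def by (auto dest!: set_update_subset_insert[THEN subsetD])
      show "prism m f (xs[i := xs ! i + y]) v = prism m f xs v + prism m f (xs[i := y]) v"
        using a1 ad prism_slot(1)[OF f ad _ i y] by (simp add: prism_def sgnw_add sum.distrib)
    qed
    have c4: "\<forall>i<m. \<forall>c v. prism m f (xs[i := iota c * xs ! i]) v = actW (iota c) (prism m f xs v)"
    proof (intro allI impI)
      fix i c v assume i: "i < m"
      have xi: "xs ! i \<in> A" using ad i unfolding adm_def by auto
      have a1: "adm A m (xs[i := iota c * xs ! i])"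
        using ad xi subalg_closed[OF A] unfolding adm_def by (auto dest!: set_update_subset_insert[THEN subsetD])
      show "prism m f (xs[i := iota c * xs ! i]) v = actW (iota c) (prism m f xs v)"
        using a1 ad prism_slot(2)[OF f ad _ i uA] by (simp add: prism_def lmod_sum_r[OF mW] actW_sgnw)
    qed
    show "(\<forall>v v'. prism m f xs (v + v') = prism m f xs v + prism m f xs v') \<and>
        (\<forall>c v. prism m f xs (actV (iota c) v) = actW (iota c) (prism m f xs v)) \<and>
        (\<forall>i<m. \<forall>y\<in>A. \<forall>v. prism m f (xs[i := xs ! i + y]) v = prism m f xs v + prism m f (xs[i := y]) v) \<and>
        (\<forall>i<m. \<forall>c v. prism m f (xs[i := iota c * xs ! i]) v = actW (iota c) (prism m f xs v))"
      using c1 c2 c3 c4 by blast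
  qed
qed

end


context uctx begin

lemma prism_bar_d:
  assumes f: "cocycle iota A actV actW (Suc m) f" and ad: "adm A (Suc m) xs"
  shows "bar_d actV actW m (prism m f) xs v = f xs v - f (map (\<lambda>x. x * u) xs) v"
proof -
  have len: "length xs = Suc m" and sA: "set xs \<subseteq> A" using ad by (auto simp: adm_def)
  obtain x xs' where xs: "xs = x # xs'" using len by (cases xs) auto
  have fc: "cochain iota A actV actW (Suc m) f" using f by (simp add: cocycle_def)
  define G where "G = (\<lambda>k j. f (Pl u k (merge j xs)) v)"
  define Qv where "Qv = (\<lambda>k. f (Ql u k xs) v)"
  have T: "\<forall>k \<le> Suc m. actW (hd (Pl u k xs)) (f (tl (Pl u k xs)) v)
        + (\<Sum>j<Suc m. sgnw (Suc j) (f (merge j (Pl u k xs)) v))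
        + sgnw (Suc (Suc m)) (f (butlast (Pl u k xs)) (actV (last (Pl u k xs)) v)) = 0"
  proof (intro allI impI)
    fix k assume "k \<le> Suc m"
    have "adm A (Suc (Suc m)) (Pl u k xs)" using adm_Pl[OF ad] .
    then have "bar_d actV actW (Suc m) f (Pl u k xs) v = 0" using f by (simp add: cocycle_def)
    then show "actW (hd (Pl u k xs)) (f (tl (Pl u k xs)) v)
        + (\<Sum>j<Suc m. sgnw (Suc j) (f (merge j (Pl u k xs)) v))
        + sgnw (Suc (Suc m)) (f (butlast (Pl u k xs)) (actV (last (Pl u k xs)) v)) = 0"
      by (simp only: bar_d_def)
  qed
  have A0: "actW (hd (Pl u 0 xs)) (f (tl (Pl u 0 xs)) v) = f xs v" by (simp add: uW)
  have AS: "\<forall>k \<le> m. actW (hd (Pl u (Suc k) xs)) (f (tl (Pl u (Suc k) xs)) v) = actW (hd xs) (f (Pl u k (tl xs)) v)"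
    using xs by (simp add: W uW)
  have LS: "\<forall>k \<le> m. sgnw (Suc (Suc m)) (f (butlast (Pl u k xs)) (actV (last (Pl u k xs)) v))
      = sgnw (Suc (Suc m)) (f (Pl u k (butlast xs)) (actV (last xs) v))"
    using len by (simp add: Pl_last Pl_butlast)
  have Ln: "sgnw (Suc (Suc m)) (f (butlast (Pl u (Suc m) xs)) (actV (last (Pl u (Suc m) xs)) v))
      = sgnw (Suc (Suc m)) (f (map (\<lambda>x. x * u) xs) v)"
    using Pl_len[of u xs] len by (simp add: uV)
  have MS: "\<forall>k \<le> Suc m. (\<Sum>j<Suc m. sgnw (Suc j) (f (merge j (Pl u k xs)) v))
     = (\<Sum>j<k-1. sgnw (Suc j) (G (k-1) j)) + (\<Sum>j\<in>{k..<m}. sgnw j (G k j))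
       + (if 0<k then sgnw k (Qv k) else 0) - (if k < Suc m then sgnw k (Qv (Suc k)) else 0)"
  proof (intro allI impI)
    fix k assume k: "k \<le> Suc m"
    have "(\<Sum>j<Suc m. sgnw (Suc j) (f (merge j (Pl u k xs)) v))
      = (\<Sum>j<Suc m. sgnw (Suc j) (if Suc j < k then G (k-1) j else if Suc j = k then Qv k
            else if j = k then Qv (Suc k) else G k (j-1)))"
    proof (intro sum.cong refl)
      fix j assume "j \<in> {..<Suc m}"
      then have j: "j < length xs" using len by simp
      show "sgnw (Suc j) (f (merge j (Pl u k xs)) v) = sgnw (Suc j) (if Suc j < k then G (k-1) j else if Suc j = k then Qv k
            else if j = k then Qv (Suc k) else G k (j-1))"
        unfolding merge_Pl[OF j k[folded len]] G_def Qv_def by simp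
    qed
    also have "\<dots> = (\<Sum>j<k-1. sgnw (Suc j) (G (k-1) j)) + (\<Sum>j\<in>{k..<m}. sgnw j (G k j))
       + (if 0<k then sgnw k (Qv k) else 0) - (if k < Suc m then sgnw k (Qv (Suc k)) else 0)"
      by (rule Msum[OF k])
    finally show "(\<Sum>j<Suc m. sgnw (Suc j) (f (merge j (Pl u k xs)) v))
     = (\<Sum>j<k-1. sgnw (Suc j) (G (k-1) j)) + (\<Sum>j\<in>{k..<m}. sgnw j (G k j))
       + (if 0<k then sgnw k (Qv k) else 0) - (if k < Suc m then sgnw k (Qv (Suc k)) else 0)" .
  qed
  have main: "actW (hd xs) (\<Sum>k\<le>m. sgnw k (f (Pl u k (tl xs)) v)) + (\<Sum>j<m. sgnw (Suc j) (\<Sum>k\<le>m. sgnw k (G k j)))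
     + sgnw (Suc m) (\<Sum>k\<le>m. sgnw k (f (Pl u k (butlast xs)) (actV (last xs) v))) = f xs v - f (map (\<lambda>x. x * u) xs) v"
    by (rule prism_alg[where A = "\<lambda>k. actW (hd (Pl u k xs)) (f (tl (Pl u k xs)) v)"
        and Mk = "\<lambda>k. \<Sum>j<Suc m. sgnw (Suc j) (f (merge j (Pl u k xs)) v)"
        and L = "\<lambda>k. sgnw (Suc (Suc m)) (f (butlast (Pl u k xs)) (actV (last (Pl u k xs)) v))"
        and Qv = Qv, OF T A0 AS LS Ln MS])
  have p1: "prism m f (tl xs) v = (\<Sum>k\<le>m. sgnw k (f (Pl u k (tl xs)) v))"
    using sA len xs by (simp add: prism_def adm_def)
  have p2: "prism m f (merge j xs) v = (\<Sum>k\<le>m. sgnw k (G k j))" if j: "j < m" for j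
  proof -
    have "adm A m (merge j xs)" using len sA j subalg_closed[OF A] set_merge[of j xs A] unfolding adm_def by auto
    then show ?thesis by (simp add: prism_def G_def)
  qed
  have p3: "prism m f (butlast xs) w = (\<Sum>k\<le>m. sgnw k (f (Pl u k (butlast xs)) w))" for w
    using sA len by (auto simp: prism_def adm_def dest: in_set_butlastD)
  have "bar_d actV actW m (prism m f) xs v = actW (hd xs) (\<Sum>k\<le>m. sgnw k (f (Pl u k (tl xs)) v)) + (\<Sum>j<m. sgnw (Suc j) (\<Sum>k\<le>m. sgnw k (G k j)))
     + sgnw (Suc m) (\<Sum>k\<le>m. sgnw k (f (Pl u k (butlast xs)) (actV (last xs) v)))"
    unfolding bar_d_def p1 p3 using p2 by simp
  then show ?thesis using main by simp
qed

lemma goodmap_u: "goodmap (\<lambda>x. x * u) A A"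
  unfolding goodmap_def
  using uA_closed uprod by (auto simp: distrib_right mult.assoc fun_eq_iff V W uV uW)

lemma prism_coboundary:
  assumes f: "cocycle iota A actV actW n f"
  shows "coboundary iota A actV actW n (\<lambda>xs v. f xs v - pull (\<lambda>x. x * u) A n f xs v)"
proof -
  have fc: "cochain iota A actV actW n f" using f by (simp add: cocycle_def)
  have cc: "cochain iota A actV actW n (\<lambda>xs v. f xs v - pull (\<lambda>x. x * u) A n f xs v)"
    using cochain_add[OF fc cochain_neg[OF pull_cochain[OF A goodmap_u fc]]] by simp
  show ?thesis
  proof (cases n)
    case 0
    have "f xs v - pull (\<lambda>x. x * u) A n f xs v = 0" for xs v
      using fc 0 by (cases "adm A 0 xs") (auto simp: pull_def adm_def cochain_def)
    then show ?thesis using cc 0 by (simp add: coboundary_def)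
  next
    case (Suc m)
    have "\<forall>xs v. adm A n xs \<longrightarrow> f xs v - pull (\<lambda>x. x * u) A n f xs v = bar_d actV actW m (prism m f) xs v"
      using prism_bar_d[of m f] f Suc by (simp add: pull_def)
    then show ?thesis using cc Suc prism_cochain[of m f] fc by (auto simp: coboundary_def)
  qed
qed

end


lemma falg:
  assumes "falgebra iota"
  shows "iota 1 = 1" "iota (a + b) = iota a + iota b" "iota (a * b) = iota a * iota b" "iota c * x = x * iota c"
  using assms unfolding falgebra_def by blast+

lemma falg_0: assumes "falgebra iota" shows "iota 0 = 0"
proof -
  have "iota 0 + iota 0 = iota 0 + 0" using falg(2)[OF assms, of 0 0] by simp
  then show ?thesis by simp
qed

lemma falg_of_nat: assumes "falgebra iota" shows "iota (of_nat n) = of_nat n"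
  by (induction n) (auto simp: falg[OF assms] falg_0[OF assms])

lemma falg_sum: assumes "falgebra iota" shows "iota (sum f S) = (\<Sum>x\<in>S. iota (f x))"
  by (induction S rule: infinite_finite_induct) (auto simp: falg[OF assms] falg_0[OF assms])

locale setting = ctx iota actV actW for iota :: "'f::field \<Rightarrow> 'r::ring_1"
    and actV :: "'r \<Rightarrow> 'v::ab_group_add \<Rightarrow> 'v" and actW :: "'r \<Rightarrow> 'w::ab_group_add \<Rightarrow> 'w" +
  fixes Lam Z :: "'r set" and sec :: "'r set \<Rightarrow> 'r" and om :: "'r \<Rightarrow> 'f" and p :: nat
  assumes Lam: "subalgebra iota Lam" and Zg: "central_unit_group Z"
    and pr: "prime p" and ch: "CHAR('f) = p" and cop: "coprime (card Z) p"
    and cp: "crossed_product Lam Z sec"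
    and chV: "acts_by_character iota Z actV om" and chW: "acts_by_character iota Z actW om"
begin

abbreviation "H \<equiv> Lam \<inter> Z"
abbreviation "Y \<equiv> quotY Lam Z"

lemma iota_simps: "iota 1 = 1" "iota (a + b) = iota a + iota b" "iota (a * b) = iota a * iota b" "iota 0 = 0"
  using falg[OF fa] falg_0[OF fa] by blast+
lemma iota_comm: "iota c * x = x * iota c" using falg(4)[OF fa] .

lemma Z_props: "finite Z" "1 \<in> Z" "\<And>x y. x \<in> Z \<Longrightarrow> y \<in> Z \<Longrightarrow> x * y \<in> Z"
  "\<And>z. z \<in> Z \<Longrightarrow> \<exists>z'\<in>Z. z * z' = 1 \<and> z' * z = 1" "\<And>z x. z \<in> Z \<Longrightarrow> z * x = x * z"
  using Zg unfolding central_unit_group_def by blast+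

lemma om_props: "\<And>z. z \<in> Z \<Longrightarrow> om z \<noteq> 0" "\<And>z1 z2. z1 \<in> Z \<Longrightarrow> z2 \<in> Z \<Longrightarrow> om (z1 * z2) = om z1 * om z2"
  "\<And>z v. z \<in> Z \<Longrightarrow> actV z v = actV (iota (om z)) v" "\<And>z w. z \<in> Z \<Longrightarrow> actW z w = actW (iota (om z)) w"
  using chV chW unfolding acts_by_character_def by blast+

lemma Lam_sum: "(\<And>x. x \<in> S \<Longrightarrow> f x \<in> Lam) \<Longrightarrow> sum f S \<in> Lam"
proof (induction S rule: infinite_finite_induct)
  case (infinite A) then show ?case using subalg_closed(4)[OF Lam, of 0] by (simp add: iota_simps)
next
  case empty then show ?case using subalg_closed(4)[OF Lam, of 0] by (simp add: iota_simps)
next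
  case (insert x F) then show ?case using subalg_closed(1)[OF Lam] by simp
qed

lemma Z_cancel: "z \<in> Z \<Longrightarrow> z * a = z * b \<Longrightarrow> a = b"
proof -
  assume z: "z \<in> Z" and e: "z * a = z * b"
  obtain z' where "z' * z = 1" using Z_props(4)[OF z] by auto
  then have "z' * (z * a) = z' * (z * b) \<Longrightarrow> a = b" by (simp add: mult.assoc[symmetric])
  then show "a = b" using e by simp
qed

definition sgrp :: "'r set \<Rightarrow> bool" where
  "sgrp S \<longleftrightarrow> S \<subseteq> Z \<and> 1 \<in> S \<and> (\<forall>x\<in>S. \<forall>y\<in>S. x * y \<in> S)"

lemma sgrp_Z: "sgrp Z" using Z_props unfolding sgrp_def by auto
lemma sgrp_H: "sgrp H"
proof -
  have "1 \<in> Lam" using subalg_closed(4)[OF Lam, of 1] iota_simps(1) by simp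
  then show ?thesis using Z_props(2,3) subalg_closed(2)[OF Lam] unfolding sgrp_def by auto
qed

lemma sgrp_finite: "sgrp S \<Longrightarrow> finite S" using Z_props(1) unfolding sgrp_def by (auto intro: finite_subset)

lemma sgrp_translate: assumes S: "sgrp S" and g: "g \<in> S" shows "(\<lambda>x. g * x) ` S = S"
proof -
  have gZ: "g \<in> Z" using S g unfolding sgrp_def by auto
  show ?thesis
  proof (rule endo_inj_surj)
    show "finite S" using sgrp_finite[OF S] .
    show "(\<lambda>x. g * x) ` S \<subseteq> S" using S g unfolding sgrp_def by auto
    show "inj_on (\<lambda>x. g * x) S" using Z_cancel[OF gZ] by (auto simp: inj_on_def)
  qed
qed

lemma sgrp_inv: assumes S: "sgrp S" and g: "g \<in> S" shows "\<exists>g'\<in>S. g * g' = 1 \<and> g' * g = 1"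
proof -
  have "1 \<in> (\<lambda>x. g * x) ` S" using sgrp_translate[OF S g] S unfolding sgrp_def by auto
  then obtain g' where g': "g' \<in> S" "g * g' = 1" by auto
  moreover have "g' * g = 1" using g' Z_props(5)[of g g'] S g unfolding sgrp_def by auto
  ultimately show ?thesis by auto
qed

lemma om_1: "om 1 = 1"
proof -
  have "om 1 = om 1 * om 1" using om_props(2)[OF Z_props(2) Z_props(2)] by simp
  then show ?thesis using om_props(1)[OF Z_props(2)] by (metis mult_cancel_left1)
qed

definition avg :: "'r set \<Rightarrow> 'r" where
  "avg S = (\<Sum>g\<in>S. iota (inverse (of_nat (card S)) * inverse (om g)) * g)"

lemma avg_central: "sgrp S \<Longrightarrow> avg S * x = x * avg S"
  unfolding avg_def sum_distrib_left sum_distrib_right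
proof (intro sum.cong refl)
  fix g assume "sgrp S" "g \<in> S"
  then have "g \<in> Z" unfolding sgrp_def by auto
  have "iota (inverse (of_nat (card S)) * inverse (om g)) * g * x = iota (inverse (of_nat (card S)) * inverse (om g)) * (g * x)"
    by (simp only: mult.assoc)
  also have "\<dots> = iota (inverse (of_nat (card S)) * inverse (om g)) * (x * g)" by (simp only: Z_props(5)[OF \<open>g \<in> Z\<close>, of x])
  also have "\<dots> = (iota (inverse (of_nat (card S)) * inverse (om g)) * x) * g" by (simp only: mult.assoc)
  also have "\<dots> = (x * iota (inverse (of_nat (card S)) * inverse (om g))) * g" by (simp only: iota_comm)
  finally show "iota (inverse (of_nat (card S)) * inverse (om g)) * g * x = x * (iota (inverse (of_nat (card S)) * inverse (om g)) * g)"
    by (simp only: mult.assoc)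
qed

lemma avg_absorb:
  assumes S: "sgrp S" and cS: "of_nat (card S) \<noteq> (0::'f)" and t: "\<And>g. g \<in> S \<Longrightarrow> g * t = iota (om g) * t"
  shows "avg S * t = t"
proof -
  have SZ: "S \<subseteq> Z" using S unfolding sgrp_def by auto
  have "avg S * t = (\<Sum>g\<in>S. iota (inverse (of_nat (card S)) * inverse (om g)) * (g * t))"
    unfolding avg_def sum_distrib_right by (simp add: mult.assoc)
  also have "\<dots> = (\<Sum>g\<in>S. iota (inverse (of_nat (card S))) * t)"
  proof (intro sum.cong refl)
    fix g assume g: "g \<in> S"
    have "om g \<noteq> 0" using om_props(1) g SZ by auto
    then have e: "inverse (of_nat (card S)) * inverse (om g) * om g = inverse (of_nat (card S) :: 'f)" by (simp add: mult.assoc)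
    have "iota (inverse (of_nat (card S)) * inverse (om g)) * (iota (om g) * t) = iota (inverse (of_nat (card S)) * inverse (om g) * om g) * t"
      by (simp add: mult.assoc[symmetric] iota_simps(3))
    then have "iota (inverse (of_nat (card S)) * inverse (om g)) * (iota (om g) * t) = iota (inverse (of_nat (card S))) * t"
      using e by simp
    then show "iota (inverse (of_nat (card S)) * inverse (om g)) * (g * t) = iota (inverse (of_nat (card S))) * t"
      using t[OF g] by simp
  qed
  also have "\<dots> = of_nat (card S) * (iota (inverse (of_nat (card S))) * t)" by simp
  also have "\<dots> = iota (of_nat (card S) * inverse (of_nat (card S))) * t"
    by (simp add: iota_simps falg_of_nat[OF fa] mult.assoc)
  also have "\<dots> = t" using cS by (simp add: iota_simps)
  finally show ?thesis .
qed

lemma avg_eig: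
  assumes S: "sgrp S" and g: "g \<in> S"
  shows "g * avg S = iota (om g) * avg S"
proof -
  have SZ: "S \<subseteq> Z" using S unfolding sgrp_def by auto
  have gZ: "g \<in> Z" using g SZ by auto
  define c where "c = inverse (of_nat (card S) :: 'f)"
  define phi where "phi = (\<lambda>x. iota (c * inverse (om x)) * x)"
  have "g * avg S = (\<Sum>x\<in>S. g * phi x)" unfolding avg_def phi_def c_def sum_distrib_left ..
  also have "\<dots> = (\<Sum>x\<in>S. iota (om g) * phi (g * x))"
  proof (intro sum.cong refl)
    fix x assume x: "x \<in> S"
    have xZ: "x \<in> Z" using x SZ by auto
    have o: "om (g * x) = om g * om x" using om_props(2)[OF gZ xZ] .
    have nz: "om g \<noteq> 0" "om x \<noteq> 0" using om_props(1) gZ xZ by auto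
    have "iota (om g) * phi (g * x) = iota (om g * (c * inverse (om g * om x))) * (g * x)"
      unfolding phi_def o by (simp add: iota_simps mult.assoc)
    also have "om g * (c * inverse (om g * om x)) = c * inverse (om x)" using nz by (simp add: field_simps)
    finally have "iota (om g) * phi (g * x) = iota (c * inverse (om x)) * (g * x)" .
    also have "\<dots> = g * phi x"
    proof -
      have "g * phi x = (g * iota (c * inverse (om x))) * x" unfolding phi_def by (simp only: mult.assoc)
      also have "\<dots> = (iota (c * inverse (om x)) * g) * x" by (simp only: Z_props(5)[OF gZ])
      finally show ?thesis by (simp only: mult.assoc)
    qed
    finally show "g * phi x = iota (om g) * phi (g * x)" by simp
  qed
  also have "\<dots> = iota (om g) * (\<Sum>x\<in>S. phi (g * x))" by (simp add: sum_distrib_left)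
  also have "(\<Sum>x\<in>S. phi (g * x)) = (\<Sum>y\<in>(\<lambda>x. g * x) ` S. phi y)"
    using Z_cancel[OF gZ] by (subst sum.reindex) (auto simp: inj_on_def)
  also have "\<dots> = avg S" unfolding sgrp_translate[OF S g] avg_def phi_def c_def ..
  finally show ?thesis .
qed

lemma avg_idem: assumes S: "sgrp S" and cS: "of_nat (card S) \<noteq> (0::'f)" shows "avg S * avg S = avg S"
  using avg_absorb[OF S cS avg_eig[OF S]] .

lemma avg_actV: assumes S: "sgrp S" and cS: "of_nat (card S) \<noteq> (0::'f)" shows "actV (avg S) v = v"
proof -
  have SZ: "S \<subseteq> Z" using S unfolding sgrp_def by auto
  have "actV (avg S) v = (\<Sum>g\<in>S. actV (iota (inverse (of_nat (card S)) * inverse (om g))) (actV g v))"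
    unfolding avg_def lmod_sum_l[OF mV] by (simp add: V)
  also have "\<dots> = (\<Sum>g\<in>S. actV (iota (inverse (of_nat (card S)))) v)"
  proof (intro sum.cong refl)
    fix g assume g: "g \<in> S"
    have nz: "om g \<noteq> 0" using om_props(1) g SZ by auto
    have "actV (iota (inverse (of_nat (card S)) * inverse (om g))) (actV g v)
        = actV (iota (inverse (of_nat (card S)) * inverse (om g)) * iota (om g)) v"
      using om_props(3)[of g v] g SZ by (auto simp: V)
    also have "\<dots> = actV (iota (inverse (of_nat (card S)))) v"
      using nz by (simp add: iota_simps(3)[symmetric] mult.assoc)
    finally show "actV (iota (inverse (of_nat (card S)) * inverse (om g))) (actV g v) = actV (iota (inverse (of_nat (card S)))) v" .
  qed
  also have "\<dots> = actV (\<Sum>g\<in>S. iota (inverse (of_nat (card S)))) v" by (rule lmod_sum_l[OF mV, symmetric])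
  also have "(\<Sum>g\<in>S. iota (inverse (of_nat (card S)))) = iota (of_nat (card S) * inverse (of_nat (card S)))"
    by (simp add: iota_simps falg_of_nat[OF fa])
  also have "\<dots> = 1" using cS by (simp add: iota_simps)
  finally show ?thesis by (simp add: V)
qed

lemma avg_actW: assumes S: "sgrp S" and cS: "of_nat (card S) \<noteq> (0::'f)" shows "actW (avg S) w = w"
proof -
  have SZ: "S \<subseteq> Z" using S unfolding sgrp_def by auto
  have "actW (avg S) w = (\<Sum>g\<in>S. actW (iota (inverse (of_nat (card S)) * inverse (om g))) (actW g w))"
    unfolding avg_def lmod_sum_l[OF mW] by (simp add: W)
  also have "\<dots> = (\<Sum>g\<in>S. actW (iota (inverse (of_nat (card S)))) w)"
  proof (intro sum.cong refl)
    fix g assume g: "g \<in> S"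
    have nz: "om g \<noteq> 0" using om_props(1) g SZ by auto
    have "actW (iota (inverse (of_nat (card S)) * inverse (om g))) (actW g w)
        = actW (iota (inverse (of_nat (card S)) * inverse (om g)) * iota (om g)) w"
      using om_props(4)[of g w] g SZ by (auto simp: W)
    also have "\<dots> = actW (iota (inverse (of_nat (card S)))) w"
      using nz by (simp add: iota_simps(3)[symmetric] mult.assoc)
    finally show "actW (iota (inverse (of_nat (card S)) * inverse (om g))) (actW g w) = actW (iota (inverse (of_nat (card S)))) w" .
  qed
  also have "\<dots> = actW (\<Sum>g\<in>S. iota (inverse (of_nat (card S)))) w" by (rule lmod_sum_l[OF mW, symmetric])
  also have "(\<Sum>g\<in>S. iota (inverse (of_nat (card S)))) = iota (of_nat (card S) * inverse (of_nat (card S)))"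
    by (simp add: iota_simps falg_of_nat[OF fa])
  also have "\<dots> = 1" using cS by (simp add: iota_simps)
  finally show ?thesis by (simp add: W)
qed

lemma avg_Lam: assumes "S \<subseteq> Lam" shows "avg S \<in> Lam"
  unfolding avg_def using assms subalg_closed[OF Lam] by (intro Lam_sum) auto

end


context setting begin

lemma cp_parts:
  "\<And>y. y \<in> Y \<Longrightarrow> sec y \<in> y"
  "\<And>x. \<exists>!a. (\<forall>y\<in>Y. a y \<in> Lam) \<and> (\<forall>y. y \<notin> Y \<longrightarrow> a y = 0) \<and> x = (\<Sum>y\<in>Y. a y * sec y)"
proof -
  note c = cp[unfolded crossed_product_def Let_def]
  show "\<And>y. y \<in> Y \<Longrightarrow> sec y \<in> y" using conjunct1[OF c] by (rule bspec)
  show "\<And>x. \<exists>!a. (\<forall>y\<in>Y. a y \<in> Lam) \<and> (\<forall>y. y \<notin> Y \<longrightarrow> a y = 0) \<and> x = (\<Sum>y\<in>Y. a y * sec y)"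
    using conjunct1[OF conjunct2[OF conjunct2[OF conjunct2[OF c]]]] by (rule spec)
qed

lemma Y_form: "y \<in> Y \<Longrightarrow> \<exists>z0\<in>Z. y = zcoset H z0"
  unfolding quotY_def by auto

lemma coset_sub: "z0 \<in> Z \<Longrightarrow> zcoset H z0 \<subseteq> Z"
  unfolding zcoset_def using Z_props(3) by auto

lemma secZ: "y \<in> Y \<Longrightarrow> sec y \<in> Z"
  using Y_form cp_parts(1) coset_sub by blast

lemma finite_Y: "finite Y" unfolding quotY_def using Z_props(1) by simp

lemma coset_shift: assumes "z0 \<in> Z" "k \<in> H" shows "zcoset H (z0 * k) = zcoset H z0"
proof -
  have "zcoset H (z0 * k) = (\<lambda>h. z0 * h) ` ((\<lambda>h. k * h) ` H)"
    unfolding zcoset_def image_image by (simp add: mult.assoc)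
  also have "(\<lambda>h. k * h) ` H = H" using sgrp_translate[OF sgrp_H assms(2)] .
  finally show ?thesis unfolding zcoset_def .
qed

lemma H_sub: "H \<subseteq> Z" by auto

lemma bij_YH: "bij_betw (\<lambda>(y, h). sec y * h) (Y \<times> H) Z"
proof (rule bij_betw_imageI)
  show "inj_on (\<lambda>(y, h). sec y * h) (Y \<times> H)"
  proof (rule inj_onI, clarify)
    fix y h y' h' assume y: "y \<in> Y" and h: "h \<in> Lam" "h \<in> Z" and y': "y' \<in> Y" and h': "h' \<in> Lam" "h' \<in> Z"
      and eq: "sec y * h = sec y' * h'"
    obtain z0 where z0: "z0 \<in> Z" "y = zcoset H z0" using Y_form[OF y] by auto
    obtain z1 where z1: "z1 \<in> Z" "y' = zcoset H z1" using Y_form[OF y'] by auto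
    obtain h0 where h0: "h0 \<in> H" "sec y = z0 * h0" using cp_parts(1)[OF y] z0 unfolding zcoset_def by auto
    obtain h1 where h1: "h1 \<in> H" "sec y' = z1 * h1" using cp_parts(1)[OF y'] z1 unfolding zcoset_def by auto
    have hh: "h0 * h \<in> H" using h0 h sgrp_H unfolding sgrp_def by auto
    obtain i where i: "i \<in> H" "(h0 * h) * i = 1" using sgrp_inv[OF sgrp_H hh] by auto
    have k: "h1 * h' * i \<in> H" using h1 h' i sgrp_H unfolding sgrp_def by auto
    have "z0 = z0 * ((h0 * h) * i)" using i by simp
    also have "\<dots> = (sec y * h) * i" using h0 by (simp add: mult.assoc)
    also have "\<dots> = z1 * (h1 * h' * i)" using eq h1 by (simp add: mult.assoc)
    finally have "z0 = z1 * (h1 * h' * i)" .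
    then have "y = y'" using z0 z1 coset_shift[OF z1(1) k] by simp
    moreover have "h = h'" using eq \<open>y = y'\<close> Z_cancel[OF secZ[OF y]] by simp
    ultimately show "y = y' \<and> h = h'" by simp
  qed
  show "(\<lambda>(y, h). sec y * h) ` (Y \<times> H) = Z"
  proof
    show "(\<lambda>(y, h). sec y * h) ` (Y \<times> H) \<subseteq> Z" using secZ Z_props(3) by auto
    show "Z \<subseteq> (\<lambda>(y, h). sec y * h) ` (Y \<times> H)"
    proof
      fix z assume z: "z \<in> Z"
      have y: "zcoset H z \<in> Y" unfolding quotY_def using z by auto
      obtain h0 where h0: "h0 \<in> H" "sec (zcoset H z) = z * h0" using cp_parts(1)[OF y] unfolding zcoset_def by auto
      obtain i where i: "i \<in> H" "h0 * i = 1" using sgrp_inv[OF sgrp_H h0(1)] by auto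
      have "sec (zcoset H z) * i = z" using h0 i by (simp add: mult.assoc)
      then show "z \<in> (\<lambda>(y, h). sec y * h) ` (Y \<times> H)" using y i by force
    qed
  qed
qed

lemma card_Z: "card Z = card Y * card H"
  using bij_betw_same_card[OF bij_YH] by (simp add: card_cartesian_product)

lemma of_nat_nz: assumes "n dvd card Z" shows "of_nat n \<noteq> (0::'f)"
proof
  assume "of_nat n = (0::'f)"
  then have "p dvd n" using ch by (simp add: of_nat_eq_0_iff_char_dvd)
  then have "p dvd card Z" using assms by (rule dvd_trans)
  then have "is_unit p" using cop coprime_common_divisor[of "card Z" p p] by simp
  then show False using pr by simp
qed

lemma cZ: "of_nat (card Z) \<noteq> (0::'f)" by (rule of_nat_nz) simp
lemma cH: "of_nat (card H) \<noteq> (0::'f)" by (rule of_nat_nz) (simp add: card_Z)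

definition "e = avg Z"
definition "e' = avg H"

lemma e_props: "e * e = e" "\<And>x. e * x = x * e" "\<And>v. actV e v = v" "\<And>w. actW e w = w"
  "\<And>z. z \<in> Z \<Longrightarrow> z * e = iota (om z) * e"
  unfolding e_def
  by (rule avg_idem[OF sgrp_Z cZ], rule avg_central[OF sgrp_Z], rule avg_actV[OF sgrp_Z cZ],
    rule avg_actW[OF sgrp_Z cZ], erule avg_eig[OF sgrp_Z])

lemma e'_props: "e' * e' = e'" "\<And>x. e' * x = x * e'" "\<And>v. actV e' v = v" "\<And>w. actW e' w = w"
  "e' \<in> Lam" "e' * e = e"
  unfolding e'_def
  by (rule avg_idem[OF sgrp_H cH], rule avg_central[OF sgrp_H], rule avg_actV[OF sgrp_H cH],
    rule avg_actW[OF sgrp_H cH], rule avg_Lam, blast, rule avg_absorb[OF sgrp_H cH], simp add: e_props(5))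

lemma E3: "\<exists>l\<in>Lam. l * e = x * e"
proof -
  obtain a where a: "\<forall>y\<in>Y. a y \<in> Lam" "x = (\<Sum>y\<in>Y. a y * sec y)" using cp_parts(2)[of x] by auto
  have "x * e = (\<Sum>y\<in>Y. a y * (sec y * e))" unfolding a(2) sum_distrib_right by (simp add: mult.assoc)
  also have "\<dots> = (\<Sum>y\<in>Y. a y * iota (om (sec y))) * e"
    unfolding sum_distrib_right by (intro sum.cong refl) (simp add: e_props(5)[OF secZ] mult.assoc)
  finally have "x * e = (\<Sum>y\<in>Y. a y * iota (om (sec y))) * e" .
  moreover have "(\<Sum>y\<in>Y. a y * iota (om (sec y))) \<in> Lam"
    using a(1) subalg_closed[OF Lam] by (intro Lam_sum) auto
  ultimately show ?thesis by auto
qed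

lemma iota_swap: "m * (iota k * z) = iota k * (m * z)"
proof -
  have "m * (iota k * z) = (m * iota k) * z" by (simp only: mult.assoc)
  also have "\<dots> = (iota k * m) * z" by (simp only: iota_comm[of k m])
  finally show ?thesis by (simp only: mult.assoc)
qed

lemma E4: assumes m: "m \<in> Lam" and me': "m * e' = m" and me: "m * e = 0" shows "m = 0"
proof -
  define cz where "cz = inverse (of_nat (card Z) :: 'f)"
  define chh where "chh = inverse (of_nat (card H) :: 'f)"
  define d where "d = cz * of_nat (card H)"
  define F where "F = (\<lambda>z. iota (cz * inverse (om z)) * (m * z))"
  have "m * e = (\<Sum>z\<in>Z. F z)"
    unfolding e_def avg_def F_def cz_def sum_distrib_left
    by (intro sum.cong refl) (rule iota_swap)
  also have "\<dots> = (\<Sum>(y, h)\<in>Y \<times> H. F (sec y * h))"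
    using sum.reindex_bij_betw[OF bij_YH, of F] by (simp add: case_prod_unfold)
  also have "\<dots> = (\<Sum>y\<in>Y. \<Sum>h\<in>H. F (sec y * h))" by (simp add: sum.cartesian_product)
  also have "\<dots> = (\<Sum>y\<in>Y. (iota (d * inverse (om (sec y))) * m) * sec y)"
  proof (intro sum.cong refl)
    fix y assume y: "y \<in> Y"
    have sy: "sec y \<in> Z" using secZ[OF y] .
    have "(\<Sum>h\<in>H. F (sec y * h)) = (\<Sum>h\<in>H. iota (of_nat (card H) * cz * inverse (om (sec y))) * (iota (chh * inverse (om h)) * (m * h))) * sec y"
      unfolding sum_distrib_right
    proof (intro sum.cong refl)
      fix h assume h: "h \<in> H"
      have hZ: "h \<in> Z" using h by simp
      have nz: "om (sec y) \<noteq> 0" "om h \<noteq> 0" using om_props(1) sy hZ by auto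
      have c: "cz * inverse (om (sec y * h)) = of_nat (card H) * cz * inverse (om (sec y)) * (chh * inverse (om h))"
      proof -
        have k1: "of_nat (card H) * chh = (1::'f)" using cH unfolding chh_def by simp
        have "of_nat (card H) * cz * inverse (om (sec y)) * (chh * inverse (om h))
            = (of_nat (card H) * chh) * (cz * (inverse (om (sec y)) * inverse (om h)))"
          by (simp only: mult_ac)
        also have "\<dots> = cz * inverse (om (sec y * h))"
          using k1 by (simp add: om_props(2)[OF sy hZ] inverse_mult_distrib)
        finally show ?thesis by (rule sym)
      qed
      have "F (sec y * h) = iota (cz * inverse (om (sec y * h))) * (m * (h * sec y))"
        unfolding F_def using Z_props(5)[OF sy, of h] by simp
      also have "\<dots> = iota (of_nat (card H) * cz * inverse (om (sec y))) * (iota (chh * inverse (om h)) * (m * h)) * sec y"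
        unfolding c iota_simps by (simp add: mult.assoc)
      finally show "F (sec y * h) = iota (of_nat (card H) * cz * inverse (om (sec y))) * (iota (chh * inverse (om h)) * (m * h)) * sec y" .
    qed
    also have "(\<Sum>h\<in>H. iota (of_nat (card H) * cz * inverse (om (sec y))) * (iota (chh * inverse (om h)) * (m * h)))
        = iota (of_nat (card H) * cz * inverse (om (sec y))) * (m * e')"
      unfolding e'_def avg_def chh_def sum_distrib_left
      by (intro sum.cong refl) (simp only: iota_swap[of m])
    finally show "(\<Sum>h\<in>H. F (sec y * h)) = (iota (d * inverse (om (sec y))) * m) * sec y"
      using me' unfolding d_def by (simp add: mult.commute)
  qed
  finally have sumeq: "m * e = (\<Sum>y\<in>Y. (iota (d * inverse (om (sec y))) * m) * sec y)" .
  define a1 where "a1 = (\<lambda>y. if y \<in> Y then iota (d * inverse (om (sec y))) * m else 0)"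
  have P1: "(\<forall>y\<in>Y. a1 y \<in> Lam) \<and> (\<forall>y. y \<notin> Y \<longrightarrow> a1 y = 0) \<and> m * e = (\<Sum>y\<in>Y. a1 y * sec y)"
    using sumeq m subalg_closed[OF Lam] unfolding a1_def by auto
  have P2: "(\<forall>y\<in>Y. (\<lambda>_. 0) y \<in> Lam) \<and> (\<forall>y. y \<notin> Y \<longrightarrow> (\<lambda>_. (0::'r)) y = 0) \<and> m * e = (\<Sum>y\<in>Y. (\<lambda>_. 0) y * sec y)"
    using me subalg_closed(4)[OF Lam, of 0] by (simp add: iota_simps)
  have "a1 = (\<lambda>_. 0)"
    using cp_parts(2)[of "m * e"]
  proof (rule ex1E)
    fix x assume "(\<forall>y\<in>Y. x y \<in> Lam) \<and> (\<forall>y. y \<notin> Y \<longrightarrow> x y = 0) \<and> m * e = (\<Sum>y\<in>Y. x y * sec y)"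
      and un: "\<forall>b. (\<forall>y\<in>Y. b y \<in> Lam) \<and> (\<forall>y. y \<notin> Y \<longrightarrow> b y = 0) \<and> m * e = (\<Sum>y\<in>Y. b y * sec y) \<longrightarrow> b = x"
    have "a1 = x" by (rule mp[OF spec[OF un] P1])
    moreover have "(\<lambda>_. 0) = x" by (rule mp[OF spec[OF un] P2])
    ultimately show ?thesis by simp
  qed
  moreover have y0: "zcoset H 1 \<in> Y" unfolding quotY_def using Z_props(2) by auto
  ultimately have "a1 (zcoset H 1) = 0" by simp
  then have z: "iota (d * inverse (om (sec (zcoset H 1)))) * m = 0" unfolding a1_def using y0 by simp
  have nz: "d * inverse (om (sec (zcoset H 1))) \<noteq> 0"
    using cZ cH om_props(1)[OF secZ[OF y0]] unfolding d_def cz_def by simp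
  have "m = iota (inverse (d * inverse (om (sec (zcoset H 1))))) * (iota (d * inverse (om (sec (zcoset H 1)))) * m)"
  proof -
    have "iota (inverse (d * inverse (om (sec (zcoset H 1))))) * (iota (d * inverse (om (sec (zcoset H 1)))) * m)
      = iota (inverse (d * inverse (om (sec (zcoset H 1)))) * (d * inverse (om (sec (zcoset H 1))))) * m"
      by (simp only: mult.assoc iota_simps(3))
    also have "\<dots> = m" by (simp only: left_inverse[OF nz] iota_simps(1) mult_1_left)
    finally show ?thesis by (rule sym)
  qed
  then show "m = 0" using z by simp
qed

definition chi :: "'r \<Rightarrow> 'r" where
  "chi x = (THE l. l \<in> Lam \<and> l * e' = l \<and> l * e = x * e)"

lemma chi_unique: assumes "l1 \<in> Lam" "l1 * e' = l1" "l2 \<in> Lam" "l2 * e' = l2" "l1 * e = l2 * e" shows "l1 = l2"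
proof -
  have "l1 - l2 \<in> Lam" unfolding diff_conv_add_uminus
    by (rule subalg_closed(1)[OF Lam assms(1) subalg_closed(3)[OF Lam assms(3)]])
  moreover have "(l1 - l2) * e' = l1 - l2" using assms by (simp add: left_diff_distrib)
  moreover have "(l1 - l2) * e = 0" using assms by (simp add: left_diff_distrib)
  ultimately have "l1 - l2 = 0" by (rule E4)
  then show ?thesis by simp
qed

lemma chi_props: "chi x \<in> Lam" "chi x * e' = chi x" "chi x * e = x * e"
proof -
  obtain l where l: "l \<in> Lam" "l * e = x * e" using E3 by auto
  have ex: "l * e' \<in> Lam \<and> l * e' * e' = l * e' \<and> l * e' * e = x * e"
    using l e'_props(1,5,6) subalg_closed[OF Lam] by (simp add: mult.assoc)
  have "\<exists>!l. l \<in> Lam \<and> l * e' = l \<and> l * e = x * e"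
  proof (rule ex1I[of _ "l * e'"])
    show "l * e' \<in> Lam \<and> l * e' * e' = l * e' \<and> l * e' * e = x * e" using ex .
  next
    fix l2 assume l2: "l2 \<in> Lam \<and> l2 * e' = l2 \<and> l2 * e = x * e"
    show "l2 = l * e'"
    proof (rule chi_unique)
      show "l2 \<in> Lam" "l2 * e' = l2" using l2 by simp_all
      show "l * e' \<in> Lam" "l * e' * e' = l * e'" using ex by simp_all
      show "l2 * e = l * e' * e" using ex l2 by simp
    qed
  qed
  then have "chi x \<in> Lam \<and> chi x * e' = chi x \<and> chi x * e = x * e"
    unfolding chi_def by (rule theI')
  then show "chi x \<in> Lam" "chi x * e' = chi x" "chi x * e = x * e" by auto
qed

lemma chi_eqI: "l \<in> Lam \<Longrightarrow> l * e' = l \<Longrightarrow> l * e = x * e \<Longrightarrow> chi x = l"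
  using chi_unique[OF chi_props(1,2)] chi_props(3) by simp

lemma chi_add: "chi (x + y) = chi x + chi y"
  using chi_props[of x] chi_props[of y] subalg_closed[OF Lam]
  by (intro chi_eqI) (auto simp: distrib_right)

lemma chi_mult: "chi (x * y) = chi x * chi y"
proof (rule chi_eqI)
  show "chi x * chi y \<in> Lam" using chi_props subalg_closed[OF Lam] by auto
  show "chi x * chi y * e' = chi x * chi y" using chi_props by (simp add: mult.assoc)
  have "chi x * chi y * e = chi x * (y * e)" using chi_props(3)[of y] by (simp add: mult.assoc)
  also have "\<dots> = (chi x * e) * y" using e_props(2)[of y] by (simp add: mult.assoc)
  also have "\<dots> = x * y * e" using chi_props(3)[of x] e_props(2)[of y] by (simp add: mult.assoc)
  finally show "chi x * chi y * e = x * y * e" .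
qed

lemma chi_scal: "chi (iota c * x) = iota c * chi x"
  using chi_props[of x] subalg_closed[OF Lam]
  by (intro chi_eqI) (auto simp: mult.assoc)

lemma chi_actV: "actV (chi x) = actV x"
proof
  fix v
  have "actV (chi x) v = actV (chi x * e) v" using e_props(3) by (simp add: V)
  also have "\<dots> = actV (x * e) v" using chi_props(3) by simp
  also have "\<dots> = actV x v" using e_props(3) by (simp add: V)
  finally show "actV (chi x) v = actV x v" .
qed

lemma chi_actW: "actW (chi x) = actW x"
proof
  fix v
  have "actW (chi x) v = actW (chi x * e) v" using e_props(4) by (simp add: W)
  also have "\<dots> = actW (x * e) v" using chi_props(3) by simp
  also have "\<dots> = actW x v" using e_props(4) by (simp add: W)
  finally show "actW (chi x) v = actW x v" .
qed

lemma chi_Lam: "a \<in> Lam \<Longrightarrow> chi a = a * e'"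
  using e'_props(1,5,6) subalg_closed[OF Lam] by (intro chi_eqI) (auto simp: mult.assoc)

lemma chi_e: "chi x * e = x * e" using chi_props(3) .

end


context setting begin

lemma subalg_UNIV: "subalgebra iota UNIV" unfolding subalgebra_def by auto

lemma uctx_L: "uctx iota actV actW Lam e'"
  unfolding uctx_def uctx_axioms_def
  using ctx_axioms Lam e'_props by blast

lemma uctx_R: "uctx iota actV actW UNIV e"
  unfolding uctx_def uctx_axioms_def
  using ctx_axioms subalg_UNIV e_props by blast

lemma gm_chi_L: "goodmap chi UNIV Lam"
  unfolding goodmap_def using chi_props(1) chi_add chi_mult chi_scal chi_actV chi_actW by blast

lemma gm_chi_U: "goodmap chi UNIV UNIV"
  unfolding goodmap_def using chi_add chi_mult chi_scal chi_actV chi_actW by blast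

lemma gm_id: "goodmap id Lam UNIV"
  unfolding goodmap_def by simp

abbreviation "rel A n \<equiv> ext_rel iota A actV actW n"
abbreviation "cyc A n f \<equiv> cocycle iota A actV actW n f"

lemma eqv: "equiv {f. cyc A n f} (rel A n)" by (rule ext_rel_equiv)

lemma rel_sym: "(f, g) \<in> rel A n \<Longrightarrow> (g, f) \<in> rel A n"
  using eqv unfolding equiv_def by (blast dest: symD)
lemma rel_trans: "(f, g) \<in> rel A n \<Longrightarrow> (g, h) \<in> rel A n \<Longrightarrow> (f, h) \<in> rel A n"
  using eqv unfolding equiv_def by (blast dest: transD)
lemma rel_refl: "cyc A n f \<Longrightarrow> (f, f) \<in> rel A n"
  using eqv unfolding equiv_def refl_on_def by blast
lemma rel_cyc: "(f, g) \<in> rel A n \<Longrightarrow> cyc A n f \<and> cyc A n g"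
  unfolding ext_rel_def by blast

lemma res_pull: "cyc UNIV n f \<Longrightarrow> res_cochain Lam f = pull id Lam n f"
  using pull_id_res[of n f Lam] unfolding cocycle_def by simp

lemma res_cyc: "cyc UNIV n f \<Longrightarrow> cyc Lam n (res_cochain Lam f)"
  using res_pull pull_cocycle[OF Lam gm_id] by simp

lemma res_rel: "(f, g) \<in> rel UNIV n \<Longrightarrow> (res_cochain Lam f, res_cochain Lam g) \<in> rel Lam n"
  using rel_cyc[of f g UNIV n] res_pull[of n f] res_pull[of n g] pull_rel[OF Lam gm_id] by simp

definition C :: "nat \<Rightarrow> ('r list \<Rightarrow> 'v \<Rightarrow> 'w) \<Rightarrow> 'r list \<Rightarrow> 'v \<Rightarrow> 'w" where
  "C n g = pull chi UNIV n g"

lemma C_cyc: "cyc Lam n g \<Longrightarrow> cyc UNIV n (C n g)"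
  unfolding C_def using pull_cocycle[OF subalg_UNIV gm_chi_L] by simp

lemma C_rel: "(f, g) \<in> rel Lam n \<Longrightarrow> (C n f, C n g) \<in> rel UNIV n"
  unfolding C_def using pull_rel[OF subalg_UNIV gm_chi_L] by simp

lemma I1: assumes g: "cyc Lam n g" shows "(res_cochain Lam (C n g), g) \<in> rel Lam n"
proof -
  have "res_cochain Lam (C n g) = pull id Lam n (C n g)" using res_pull C_cyc[OF g] by simp
  also have "\<dots> = pull (chi \<circ> id) Lam n g" unfolding C_def by (rule pull_comp) simp
  also have "\<dots> = pull (\<lambda>x. x * e') Lam n g" by (rule pull_cong) (simp add: chi_Lam)
  finally have eq: "res_cochain Lam (C n g) = pull (\<lambda>x. x * e') Lam n g" .
  interpret L: uctx iota actV actW Lam e' by (rule uctx_L)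
  have "coboundary iota Lam actV actW n (\<lambda>xs v. g xs v - pull (\<lambda>x. x * e') Lam n g xs v)"
    using L.prism_coboundary[OF g] .
  moreover have "cyc Lam n (pull (\<lambda>x. x * e') Lam n g)" using pull_cocycle[OF Lam L.goodmap_u g] .
  ultimately have "(g, pull (\<lambda>x. x * e') Lam n g) \<in> rel Lam n" using g unfolding ext_rel_def by simp
  then show ?thesis unfolding eq by (rule rel_sym)
qed

lemma I2: assumes f: "cyc UNIV n f" shows "(C n (res_cochain Lam f), f) \<in> rel UNIV n"
proof -
  interpret R: uctx iota actV actW UNIV e by (rule uctx_R)
  define Ef where "Ef = pull (\<lambda>x. x * e) UNIV n f"
  have "C n (res_cochain Lam f) = pull chi UNIV n (pull id Lam n f)" unfolding C_def using res_pull[OF f] by simp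
  also have "\<dots> = pull (id \<circ> chi) UNIV n f" by (rule pull_comp) (simp add: chi_props(1))
  also have "\<dots> = pull chi UNIV n f" by simp
  finally have eq1: "C n (res_cochain Lam f) = pull chi UNIV n f" .
  have cE: "cyc UNIV n Ef" unfolding Ef_def using pull_cocycle[OF subalg_UNIV R.goodmap_u f] .
  have fE: "(f, Ef) \<in> rel UNIV n"
    using R.prism_coboundary[OF f] f cE unfolding ext_rel_def Ef_def by simp
  have "(pull chi UNIV n f, pull chi UNIV n Ef) \<in> rel UNIV n"
    by (rule pull_rel[OF subalg_UNIV gm_chi_U fE])
  moreover have "pull chi UNIV n Ef = Ef"
  proof -
    have "pull chi UNIV n Ef = pull ((\<lambda>x. x * e) \<circ> chi) UNIV n f" unfolding Ef_def by (rule pull_comp) simp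
    also have "\<dots> = pull (\<lambda>x. x * e) UNIV n f" by (rule pull_cong) (simp add: chi_e)
    finally show ?thesis unfolding Ef_def .
  qed
  ultimately have "(pull chi UNIV n f, Ef) \<in> rel UNIV n" by simp
  then have "(pull chi UNIV n f, f) \<in> rel UNIV n" using rel_sym[OF fE] by (rule rel_trans)
  then show ?thesis unfolding eq1 .
qed

lemma main:
  shows "(\<forall>E\<in>Ext iota UNIV actV actW i. \<forall>f\<in>E.
            ext_res iota Lam actV actW i E = ext_rel iota Lam actV actW i `` {res_cochain Lam f})
       \<and> bij_betw (ext_res iota Lam actV actW i) (Ext iota UNIV actV actW i) (Ext iota Lam actV actW i)"
proof -
  have P1: "ext_res iota Lam actV actW i E = rel Lam i `` {res_cochain Lam f}"
    if E: "E \<in> Ext iota UNIV actV actW i" and f: "f \<in> E" for E f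
  proof -
    obtain f0 where f0: "cyc UNIV i f0" "E = rel UNIV i `` {f0}"
      using E unfolding Ext_def by (auto elim: quotientE)
    have f0f: "(f0, f) \<in> rel UNIV i" using f f0 by simp
    have "\<exists>x. x \<in> E" using f by blast
    then have "(SOME x. x \<in> E) \<in> E" by (rule someI_ex)
    then have "(f0, SOME x. x \<in> E) \<in> rel UNIV i" using f0 by simp
    then have "(SOME x. x \<in> E, f) \<in> rel UNIV i" using f0f by (blast intro: rel_sym rel_trans)
    then have "(res_cochain Lam (SOME x. x \<in> E), res_cochain Lam f) \<in> rel Lam i" by (rule res_rel)
    then show ?thesis unfolding ext_res_def by (rule equiv_class_eq[OF eqv])
  qed
  have P1': "ext_res iota Lam actV actW i (rel UNIV i `` {f}) = rel Lam i `` {res_cochain Lam f}"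
    if f: "cyc UNIV i f" for f
  proof (rule P1)
    show "rel UNIV i `` {f} \<in> Ext iota UNIV actV actW i" unfolding Ext_def using f by (auto intro: quotientI)
    show "f \<in> rel UNIV i `` {f}" using rel_refl[OF f] by simp
  qed
  have B: "bij_betw (ext_res iota Lam actV actW i) (Ext iota UNIV actV actW i) (Ext iota Lam actV actW i)"
  proof (rule bij_betw_imageI)
    show "inj_on (ext_res iota Lam actV actW i) (Ext iota UNIV actV actW i)"
    proof (rule inj_onI)
      fix E1 E2 assume E1: "E1 \<in> Ext iota UNIV actV actW i" and E2: "E2 \<in> Ext iota UNIV actV actW i"
        and eq: "ext_res iota Lam actV actW i E1 = ext_res iota Lam actV actW i E2"
      obtain f1 where f1: "cyc UNIV i f1" "E1 = rel UNIV i `` {f1}"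
        using E1 unfolding Ext_def by (auto elim: quotientE)
      obtain f2 where f2: "cyc UNIV i f2" "E2 = rel UNIV i `` {f2}"
        using E2 unfolding Ext_def by (auto elim: quotientE)
      have "rel Lam i `` {res_cochain Lam f1} = rel Lam i `` {res_cochain Lam f2}"
        using eq P1'[OF f1(1)] P1'[OF f2(1)] f1 f2 by simp
      then have "(res_cochain Lam f1, res_cochain Lam f2) \<in> rel Lam i"
        using eq_equiv_class_iff[OF eqv] res_cyc[OF f1(1)] res_cyc[OF f2(1)] by blast
      then have "(C i (res_cochain Lam f1), C i (res_cochain Lam f2)) \<in> rel UNIV i" by (rule C_rel)
      then have "(f1, f2) \<in> rel UNIV i" using I2[OF f1(1)] I2[OF f2(1)] by (blast intro: rel_sym rel_trans)
      then show "E1 = E2" unfolding f1 f2 by (rule equiv_class_eq[OF eqv])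
    qed
    show "ext_res iota Lam actV actW i ` Ext iota UNIV actV actW i = Ext iota Lam actV actW i"
    proof
      show "ext_res iota Lam actV actW i ` Ext iota UNIV actV actW i \<subseteq> Ext iota Lam actV actW i"
      proof
        fix F assume "F \<in> ext_res iota Lam actV actW i ` Ext iota UNIV actV actW i"
        then obtain E where E: "E \<in> Ext iota UNIV actV actW i" "F = ext_res iota Lam actV actW i E" by auto
        obtain f where f: "cyc UNIV i f" "E = rel UNIV i `` {f}"
          using E(1) unfolding Ext_def by (auto elim: quotientE)
        have "F = rel Lam i `` {res_cochain Lam f}" using E(2) f P1' by simp
        then show "F \<in> Ext iota Lam actV actW i" unfolding Ext_def using res_cyc[OF f(1)] by (auto intro: quotientI)
      qed
      show "Ext iota Lam actV actW i \<subseteq> ext_res iota Lam actV actW i ` Ext iota UNIV actV actW i"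
      proof
        fix F assume "F \<in> Ext iota Lam actV actW i"
        then obtain g where g: "cyc Lam i g" "F = rel Lam i `` {g}"
          unfolding Ext_def by (auto elim: quotientE)
        have E: "rel UNIV i `` {C i g} \<in> Ext iota UNIV actV actW i"
          unfolding Ext_def using C_cyc[OF g(1)] by (auto intro: quotientI)
        have "ext_res iota Lam actV actW i (rel UNIV i `` {C i g}) = rel Lam i `` {res_cochain Lam (C i g)}"
          using P1'[OF C_cyc[OF g(1)]] .
        also have "\<dots> = F" unfolding g(2) by (rule equiv_class_eq[OF eqv I1[OF g(1)]])
        finally show "F \<in> ext_res iota Lam actV actW i ` Ext iota UNIV actV actW i" using E by force
      qed
    qed
  qed
  show ?thesis using P1 B by blast
qed

end

theorem lemma5p4:
  fixes iota :: "'f::field \<Rightarrow> 'r::ring_1"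
    and Lam Z :: "'r set"
    and sec :: "'r set \<Rightarrow> 'r"
    and p :: nat
    and actV :: "'r \<Rightarrow> 'v::ab_group_add \<Rightarrow> 'v"
    and actW :: "'r \<Rightarrow> 'w::ab_group_add \<Rightarrow> 'w"
    and omV omW :: "'r \<Rightarrow> 'f"
  assumes "prime p" and "CHAR('f) = p"
    and "falgebra iota" and "artinian TYPE('r)"
    and "subalgebra iota Lam"
    and "central_unit_group Z" and "coprime (card Z) p"
    and "crossed_product Lam Z sec"
    and "lmodule actV" and "lmodule actW"
    and "acts_by_character iota Z actV omV" and "acts_by_character iota Z actW omW"
    and "\<forall>z\<in>Z. omV z = omW z"
  shows "(\<forall>E\<in>Ext iota UNIV actV actW i. \<forall>f\<in>E.
            ext_res iota Lam actV actW i E = ext_rel iota Lam actV actW i `` {res_cochain Lam f})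
       \<and> bij_betw (ext_res iota Lam actV actW i) (Ext iota UNIV actV actW i) (Ext iota Lam actV actW i)"
proof -
  have chW: "acts_by_character iota Z actW omV"
  proof -
    have cl: "\<forall>x\<in>Z. \<forall>y\<in>Z. x * y \<in> Z" using assms(6) unfolding central_unit_group_def by blast
    show ?thesis using assms(12,13) cl unfolding acts_by_character_def by auto
  qed
  interpret S: setting iota actV actW Lam Z sec omV p
    unfolding setting_def setting_axioms_def ctx_def
    using assms chW by blast
  show ?thesis by (rule S.main)
qed



end
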